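(* There exists a nonzero homogeneous polynomial $H:\mathfrak g_2^*\to\mathbb R$, of degree $h$ say, such that for all $\mu\in\Lambda$, \[ |\partial_{\mu_k}b_j^\mu/b_j^\mu|\le|\mu|^{h-1}|H(\mu)|^{-1}\quad(j=1,\dots,M,\ k=1,\dots,d_2), \] \[ \|\partial_{\mu_k}P_j^\mu\|\le|\mu|^{h-1}|H(\mu)|^{-1}\quad(j=0,\dots,M,\ k=1,\dots,d_2). \]
   Context: $\mathfrak g=\mathfrak g_1\oplus\mathfrak g_2$ is the Lie algebra of a $2$-step stratified group ($[\mathfrak g_1,\mathfrak g_1]=\mathfrak g_2\ne\{0\}$, $[\mathfrak g,\mathfrak g_2]=0$), $d_2=\dim\mathfrak g_2$, and $\langle\cdot,\cdot\rangle$ is an inner product on $\mathfrak g_1$. For $\mu\in\mathfrak g_2^*$, $J_\mu$ is the skew-symmetric endomorphism of $\mathfrak g_1$ with $\langle J_\mu x,x'\rangle=\mu([x,x'])$; $\mathfrak g_2^*$ has the inner product pulled back from the Hilbert–Schmidt inner product via $\mu\mapsto J_\mu$, with orthonormal coordinates $\mu_1,\dots,\mu_{d_2}$. Let $\Lambda\subseteq\mathfrak g_2^*$ be a nonempty Zariski-open homogeneous (dilation-invariant) subset, $M,r_1,\dots,r_M$ nonzero natural numbers, such that for all $\mu\in\Lambda$, $\sqrt{-J_\mu^2}=\sum_{j=1}^Mb_j^\mu P_j^\mu$ with distinct $b_1^\mu,\dots,b_M^\mu\in(0,\infty)$ and mutually orthogonal projections $P_j^\mu$ of rank $2r_j$,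 where $b_j^\mu$ and $P_j^\mu$ are algebraic functions of $\mu$, real-analytic on $\Lambda$; and $P_0^\mu=I-(P_1^\mu+\dots+P_M^\mu)$ is the projection onto $\ker J_\mu$. (Such $\Lambda$ and decomposition exist.) $\|\cdot\|$ denotes the operator norm. *)

theory Defs
  imports "HOL-Analysis.Analysis"
begin

inductive poly_fun :: "('a::euclidean_space \<Rightarrow> real) \<Rightarrow> bool" where
  pf_const: "poly_fun (\<lambda>x. c)"
| pf_coord: "b \<in> Basis \<Longrightarrow> poly_fun (\<lambda>x. x \<bullet> b)"
| pf_add: "poly_fun p \<Longrightarrow> poly_fun q \<Longrightarrow> poly_fun (\<lambda>x. p x + q x)"
| pf_mult: "poly_fun p \<Longrightarrow> poly_fun q \<Longrightarrow> poly_fun (\<lambda>x. p x * q x)"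

definition homog_poly :: "nat \<Rightarrow> ('a::euclidean_space \<Rightarrow> real) \<Rightarrow> bool" where
  "homog_poly h p \<longleftrightarrow> poly_fun p \<and> (\<forall>t x. p (t *\<^sub>R x) = t ^ h * p x)"

definition zariski_open :: "'a::euclidean_space set \<Rightarrow> bool" where
  "zariski_open U \<longleftrightarrow> (\<exists>S. (\<forall>p\<in>S. poly_fun p) \<and> U = {x. \<exists>p\<in>S. p x \<noteq> 0})"

definition dilation_invariant :: "'a::real_vector set \<Rightarrow> bool" where
  "dilation_invariant U \<longleftrightarrow> (\<forall>x\<in>U. \<forall>t>0. t *\<^sub>R x \<in> U)"

definition algebraic_fun_on :: "'a::euclidean_space set \<Rightarrow> ('a \<Rightarrow> real) \<Rightarrow> bool" where
  "algebraic_fun_on S f \<longleftrightarrow>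
     (\<exists>Q :: 'a \<times> real \<Rightarrow> real. poly_fun Q \<and> (\<exists>z. Q z \<noteq> 0) \<and> (\<forall>x\<in>S. Q (x, f x) = 0))"

text \<open>Real-analytic on an open set S: locally the sum of an (absolutely, i.e.
unconditionally) convergent multivariate power series.\<close>
definition real_analytic_on :: "(real^'d \<Rightarrow> real) \<Rightarrow> (real^'d) set \<Rightarrow> bool" where
  "real_analytic_on f S \<longleftrightarrow>
     (\<forall>a\<in>S. \<exists>r>0. \<exists>c :: ('d \<Rightarrow> nat) \<Rightarrow> real. \<forall>x\<in>ball a r.
        ((\<lambda>\<alpha>. c \<alpha> * (\<Prod>i\<in>UNIV. (x $ i - a $ i) ^ \<alpha> i)) has_sum f x) UNIV)"

definition partial_deriv :: "'d::finite \<Rightarrow> (real^'d \<Rightarrow> 'b::real_normed_vector) \<Rightarrow> real^'d \<Rightarrow> 'b" where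
  "partial_deriv k f x = vector_derivative (\<lambda>t. f (x + t *\<^sub>R axis k 1)) (at 0)"

definition op_norm :: "real^'n^'m \<Rightarrow> real" where
  "op_norm A = onorm (\<lambda>x. A *v x)"

definition mat_sqrt :: "real^'n^'n \<Rightarrow> real^'n^'n" where
  "mat_sqrt A = (THE S. transpose S = S \<and> (\<forall>x. 0 \<le> x \<bullet> (S *v x)) \<and> S ** S = A)"

definition Jmu :: "('d::finite \<Rightarrow> real^'n^'n) \<Rightarrow> real^'d \<Rightarrow> real^'n^'n" where
  "Jmu J \<mu> = (\<Sum>k\<in>UNIV. (\<mu> $ k) *\<^sub>R J k)"

end

theory Submission
  imports Defs "Jordan_Normal_Form.Determinant" "HOL-Computational_Algebra.Polynomial"
begin

hide_const (open) Matrix.mat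
no_notation Matrix.vec_index (infixl "$" 100)


lemma mv_inner_transpose:
  fixes A :: "real^'n^'m"
  shows "(A *v x) \<bullet> y = x \<bullet> (transpose A *v y)"
proof -
  have "(A *v x) \<bullet> y = (\<Sum>i\<in>UNIV. \<Sum>j\<in>UNIV. A$i$j * x$j * y$i)"
    by (simp add: inner_vec_def matrix_vector_mult_def sum_distrib_right)
  also have "\<dots> = (\<Sum>j\<in>UNIV. \<Sum>i\<in>UNIV. A$i$j * x$j * y$i)"
    by (rule sum.swap)
  also have "\<dots> = x \<bullet> (transpose A *v y)"
    by (simp add: inner_vec_def matrix_vector_mult_def transpose_def sum_distrib_left mult_ac)
  finally show ?thesis .
qed

lemma mv_inner_sym:
  fixes A :: "real^'n^'n"
  assumes "transpose A = A"
  shows "(A *v x) \<bullet> y = x \<bullet> (A *v y)"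
  using mv_inner_transpose[of A x y] assms by simp

definition inv_sub :: "real^'n^'n \<Rightarrow> (real^'n) set \<Rightarrow> bool" where
  "inv_sub A W \<longleftrightarrow> subspace W \<and> (\<forall>x\<in>W. A *v x \<in> W)"

lemma eig_exists:
  fixes A :: "real^'n^'n"
  assumes sym: "transpose A = A" and W: "inv_sub A W" and ne: "W \<noteq> {0}"
  shows "\<exists>x\<in>W. norm x = 1 \<and> A *v x = (x \<bullet> (A *v x)) *\<^sub>R x"
proof -
  have sub: "subspace W" and inv: "\<And>x. x \<in> W \<Longrightarrow> A *v x \<in> W" using W by (auto simp: inv_sub_def)
  have "0 \<in> W" using sub by (simp add: subspace_0)
  then obtain w where w: "w \<in> W" "w \<noteq> 0" using ne by blast
  let ?K = "W \<inter> sphere 0 1"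
  have cK: "compact ?K"
    by (simp add: closed_subspace sub closed_Int_compact)
  have "(1 / norm w) *\<^sub>R w \<in> ?K" using w sub by (simp add: subspace_scale)
  then have neK: "?K \<noteq> {}" by blast
  have cont: "continuous_on ?K (\<lambda>x. x \<bullet> (A *v x))"
    by (intro continuous_intros)
  obtain x where xK: "x \<in> ?K" and xmax: "\<And>y. y \<in> ?K \<Longrightarrow> y \<bullet> (A *v y) \<le> x \<bullet> (A *v x)"
    using continuous_attains_sup[OF cK neK cont] by auto
  define c where "c = x \<bullet> (A *v x)"
  have xW: "x \<in> W" and nx: "norm x = 1" using xK by auto
  have bound: "v \<bullet> (A *v v) \<le> c * (v \<bullet> v)" if "v \<in> W" for v
  proof (cases "v = 0")
    case True then show ?thesis by simp
  next
    case False
    let ?u = "(1 / norm v) *\<^sub>R v"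
    have "?u \<in> ?K" using that False sub by (simp add: subspace_scale)
    then have "?u \<bullet> (A *v ?u) \<le> c" unfolding c_def by (rule xmax)
    then have "(1 / norm v)^2 * (v \<bullet> (A *v v)) \<le> c"
      by (simp add: matrix_vector_mult_scaleR power2_eq_square algebra_simps)
    moreover have "v \<bullet> v = (norm v)^2" by (simp add: power2_norm_eq_inner)
    moreover have "norm v > 0" using False by simp
    ultimately show ?thesis by (simp add: field_simps power2_eq_square)
  qed
  have orth: "y \<bullet> (A *v x) = 0" if "y \<in> W" "y \<bullet> x = 0" for y
  proof -
    define a where "a = y \<bullet> (A *v x)"
    define B where "B = c * (y \<bullet> y) - y \<bullet> (A *v y)"
    have key: "2 * t * a \<le> t^2 * B" for t
    proof -
      have "x + t *\<^sub>R y \<in> W" using xW that sub by (simp add: subspace_add subspace_scale)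
      from bound[OF this]
      have b1: "(x + t *\<^sub>R y) \<bullet> (A *v (x + t *\<^sub>R y)) \<le> c * ((x + t *\<^sub>R y) \<bullet> (x + t *\<^sub>R y))" .
      have xx: "x \<bullet> x = 1" using nx by (simp add: norm_eq_1)
      have xay: "x \<bullet> (A *v y) = a" using mv_inner_sym[OF sym, of x y] by (simp add: a_def inner_commute)
      have e1: "(x + t *\<^sub>R y) \<bullet> (A *v (x + t *\<^sub>R y)) = c + 2 * t * a + t^2 * (y \<bullet> (A *v y))"
        using xay by (simp add: matrix_vector_right_distrib inner_add_left
            inner_add_right a_def c_def power2_eq_square algebra_simps)
      have e2: "(x + t *\<^sub>R y) \<bullet> (x + t *\<^sub>R y) = 1 + t^2 * (y \<bullet> y)"
        using xx that(2) by (simp add: inner_add_left inner_add_right power2_eq_square inner_commute)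
      have "c + 2 * t * a + t^2 * (y \<bullet> (A *v y)) \<le> c * (1 + t^2 * (y \<bullet> y))"
        using b1 e1 e2 by simp
      then show ?thesis by (simp add: B_def algebra_simps)
    qed
    have pos: "1 + \<bar>B\<bar> > 0" by simp
    have "2 * (a / (1 + \<bar>B\<bar>)) * a \<le> (a / (1 + \<bar>B\<bar>))^2 * B" using key .
    also have "\<dots> \<le> (a / (1 + \<bar>B\<bar>))^2 * (1 + \<bar>B\<bar>)"
      by (intro mult_left_mono) auto
    also have "\<dots> = a * a / (1 + \<bar>B\<bar>)" using pos by (simp add: power2_eq_square)
    finally have "(2 * (a * a)) / (1 + \<bar>B\<bar>) \<le> (a * a) / (1 + \<bar>B\<bar>)" by (simp add: mult_ac)
    then have "a * a \<le> 0" using pos by (simp add: divide_le_cancel)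
    then show ?thesis unfolding a_def by (smt (verit) mult_le_0_iff)
  qed
  define z where "z = A *v x - c *\<^sub>R x"
  have zW: "z \<in> W" using xW inv sub unfolding z_def by (simp add: subspace_diff subspace_scale)
  have zx: "z \<bullet> x = 0"
    using nx by (simp add: z_def c_def inner_diff_left inner_diff_right norm_eq_1 inner_commute)
  have "z \<bullet> z = z \<bullet> (A *v x) - c * (z \<bullet> x)" by (simp add: z_def inner_diff_right)
  also have "\<dots> = 0" using orth[OF zW zx] zx by simp
  finally have "z = 0" by simp
  then show ?thesis using xW nx unfolding z_def c_def by auto
qed

lemma inv_sub_perp:
  fixes A :: "real^'n^'n"
  assumes sym: "transpose A = A" and W: "inv_sub A W" and x: "x \<in> W" "A *v x = c *\<^sub>R x"
  shows "inv_sub A (W \<inter> {y. y \<bullet> x = 0})"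
proof -
  have "subspace (W \<inter> {y. y \<bullet> x = 0})"
    using W by (simp add: inv_sub_def subspace_inter subspace_hyperplane2)
  moreover have "A *v y \<in> W \<inter> {y. y \<bullet> x = 0}" if "y \<in> W" "y \<bullet> x = 0" for y
  proof -
    have "(A *v y) \<bullet> x = y \<bullet> (A *v x)" by (rule mv_inner_sym[OF sym])
    also have "\<dots> = 0" using that x by simp
    finally show ?thesis using W that by (auto simp: inv_sub_def)
  qed
  ultimately show ?thesis by (auto simp: inv_sub_def)
qed

lemma dim_perp_less:
  fixes W :: "(real^'n) set"
  assumes "subspace W" "x \<in> W" "x \<noteq> 0"
  shows "dim (W \<inter> {y. y \<bullet> x = 0}) < dim W"
proof (rule dim_psubset)
  have s1: "span (W \<inter> {y. y \<bullet> x = 0}) = W \<inter> {y. y \<bullet> x = 0}"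
    using assms by (simp add: span_eq_iff subspace_inter subspace_hyperplane2)
  have s2: "span W = W" using assms by (simp add: span_eq_iff)
  have "x \<notin> W \<inter> {y. y \<bullet> x = 0}" using assms by simp
  then show "span (W \<inter> {y. y \<bullet> x = 0}) \<subset> span W" unfolding s1 s2 using assms by blast
qed

lemma decomp_perp:
  fixes x y :: "real^'n"
  assumes "norm x = 1"
  shows "y = (y \<bullet> x) *\<^sub>R x + (y - (y \<bullet> x) *\<^sub>R x)" and "(y - (y \<bullet> x) *\<^sub>R x) \<bullet> x = 0"
  using assms by (auto simp: inner_diff_left norm_eq_1)

definition psd :: "real^'n^'n \<Rightarrow> bool" where
  "psd X \<longleftrightarrow> transpose X = X \<and> (\<forall>x. 0 \<le> x \<bullet> (X *v x))"

lemma sqrt_unique_aux: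
  fixes A X Y :: "real^'n^'n"
  assumes sym: "transpose A = A" and X: "psd X" and Y: "psd Y"
    and XA: "X ** X = A" and YA: "Y ** Y = A"
  shows "inv_sub A W \<Longrightarrow> \<forall>y\<in>W. X *v y = Y *v y"
proof (induction "dim W" arbitrary: W rule: less_induct)
  case less
  show ?case
  proof (cases "W = {0}")
    case True then show ?thesis by simp
  next
    case False
    obtain x where xW: "x \<in> W" and nx: "norm x = 1" and ex: "A *v x = (x \<bullet> (A *v x)) *\<^sub>R x"
      using eig_exists[OF sym less.prems False] by blast
    define c where "c = x \<bullet> (A *v x)"
    have c0: "c \<ge> 0"
    proof -
      have "c = (X *v x) \<bullet> (X *v x)"
        using mv_inner_sym[of X x "X *v x"] X unfolding c_def psd_def
        by (simp add: XA[symmetric] matrix_vector_mul_assoc)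
      then show ?thesis by simp
    qed
    have sq: "Z *v x = sqrt c *\<^sub>R x" if Z: "psd Z" and ZA: "Z ** Z = A" for Z
    proof (cases "c = 0")
      case True
      have "(Z *v x) \<bullet> (Z *v x) = x \<bullet> (A *v x)"
        using mv_inner_sym[of Z x "Z *v x"] Z unfolding psd_def
        by (simp add: ZA[symmetric] matrix_vector_mul_assoc)
      then have "Z *v x = 0" using True c_def by simp
      then show ?thesis using True by simp
    next
      case False
      define v where "v = Z *v x - sqrt c *\<^sub>R x"
      have "Z *v v + sqrt c *\<^sub>R v = (Z ** Z) *v x - c *\<^sub>R x"
        using c0 by (simp add: v_def matrix_vector_mul_assoc[symmetric] matrix_vector_right_distrib
            matrix_vector_mult_scaleR scaleR_diff_right algebra_simps)
      also have "\<dots> = 0" using ZA ex c_def by simp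
      finally have h: "Z *v v + sqrt c *\<^sub>R v = 0" .
      have "0 = v \<bullet> (Z *v v + sqrt c *\<^sub>R v)" using h by simp
      also have "\<dots> = v \<bullet> (Z *v v) + sqrt c * (v \<bullet> v)" by (simp add: inner_add_right)
      finally have "sqrt c * (v \<bullet> v) \<le> 0" using Z unfolding psd_def by (smt (verit))
      moreover have "sqrt c > 0" using c0 False by simp
      ultimately have "v \<bullet> v \<le> 0" by (simp add: mult_le_0_iff)
      then have "v = 0" by (metis inner_eq_zero_iff inner_ge_zero order_antisym)
      then show ?thesis by (simp add: v_def)
    qed
    have xX: "X *v x = Y *v x" using sq[OF X XA] sq[OF Y YA] by simp
    let ?W' = "W \<inter> {y. y \<bullet> x = 0}"
    have inv': "inv_sub A ?W'" using inv_sub_perp[OF sym less.prems xW ex] .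
    have sub: "subspace W" using less.prems by (simp add: inv_sub_def)
    have "x \<noteq> 0" using nx by auto
    then have "dim ?W' < dim W" using dim_perp_less[OF sub xW] by simp
    from less.hyps[OF this inv'] have IH: "\<forall>y\<in>?W'. X *v y = Y *v y" .
    show ?thesis
    proof
      fix y assume yW: "y \<in> W"
      let ?y' = "y - (y \<bullet> x) *\<^sub>R x"
      have "?y' \<in> ?W'" using decomp_perp(2)[OF nx] yW xW sub by (simp add: subspace_diff subspace_scale)
      then have "X *v ?y' = Y *v ?y'" using IH by blast
      then show "X *v y = Y *v y" using xX
        by (simp add: matrix_vector_right_distrib[symmetric] matrix_vector_mult_diff_distrib
            matrix_vector_mult_scaleR)
    qed
  qed
qed

lemma sqrt_unique:
  fixes A X Y :: "real^'n^'n"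
  assumes sym: "transpose A = A" and X: "psd X" and Y: "psd Y"
    and XA: "X ** X = A" and YA: "Y ** Y = A"
  shows "X = Y"
proof -
  have "inv_sub A UNIV" by (simp add: inv_sub_def)
  from sqrt_unique_aux[OF assms this] show ?thesis by (simp add: matrix_eq)
qed

definition outer :: "real^'n \<Rightarrow> real^'n^'n" where
  "outer x = (\<chi> i j. x$i * x$j)"

lemma outer_mv: "outer x *v y = (x \<bullet> y) *\<^sub>R x"
  by (simp add: outer_def matrix_vector_mult_def inner_vec_def Finite_Cartesian_Product.vec_eq_iff sum_distrib_left mult_ac)

lemma outer_transpose: "transpose (outer x) = outer x"
  by (simp add: outer_def transpose_def Finite_Cartesian_Product.vec_eq_iff mult.commute)

lemma transpose_add_cart: "transpose (A + B) = transpose A + transpose (B :: real^'n^'m)"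
  by (simp add: transpose_def Finite_Cartesian_Product.vec_eq_iff)

lemma transpose_scaleR_cart: "transpose (c *\<^sub>R A) = c *\<^sub>R transpose (A :: real^'n^'m)"
  by (simp add: transpose_def Finite_Cartesian_Product.vec_eq_iff)

lemma mv_scaleR_left: "(c *\<^sub>R A) *v y = c *\<^sub>R (A *v (y::real^'n) :: real^'m)"
  by (simp add: matrix_vector_mult_def Finite_Cartesian_Product.vec_eq_iff sum_distrib_left mult.assoc)

lemma sqrt_exists_aux:
  fixes A :: "real^'n^'n"
  assumes A: "psd A"
  shows "inv_sub A W \<Longrightarrow> \<exists>X. psd X \<and> (\<forall>y\<in>W. X *v (X *v y) = A *v y) \<and>
            (\<forall>y. (\<forall>w\<in>W. w \<bullet> y = 0) \<longrightarrow> X *v y = 0)"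
proof (induction "dim W" arbitrary: W rule: less_induct)
  case less
  have sym: "transpose A = A" using A by (simp add: psd_def)
  show ?case
  proof (cases "W = {0}")
    case True
    show ?thesis
      by (rule exI[of _ 0]) (simp add: psd_def True transpose_def Finite_Cartesian_Product.vec_eq_iff)
  next
    case False
    obtain x where xW: "x \<in> W" and nx: "norm x = 1" and ex: "A *v x = (x \<bullet> (A *v x)) *\<^sub>R x"
      using eig_exists[OF sym less.prems False] by blast
    define c where "c = x \<bullet> (A *v x)"
    have c0: "c \<ge> 0" using A by (simp add: psd_def c_def)
    let ?W' = "W \<inter> {y. y \<bullet> x = 0}"
    have inv': "inv_sub A ?W'" using inv_sub_perp[OF sym less.prems xW ex] .
    have sub: "subspace W" using less.prems by (simp add: inv_sub_def)
    have "x \<noteq> 0" using nx by auto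
    then have "dim ?W' < dim W" using dim_perp_less[OF sub xW] by simp
    from less.hyps[OF this inv'] obtain X' where X': "psd X'"
      and X'W: "\<forall>y\<in>?W'. X' *v (X' *v y) = A *v y"
      and X'0: "\<forall>y. (\<forall>w\<in>?W'. w \<bullet> y = 0) \<longrightarrow> X' *v y = 0" by blast
    have X'x: "X' *v x = 0" using X'0 by (simp add: inner_commute)
    have xX'y: "x \<bullet> (X' *v y) = 0" for y
      using mv_inner_sym[of X' x y] X' X'x by (simp add: psd_def)
    define X where "X = X' + sqrt c *\<^sub>R outer x"
    have Xv: "X *v y = X' *v y + (sqrt c * (x \<bullet> y)) *\<^sub>R x" for y
      by (simp add: X_def matrix_vector_mult_add_rdistrib mv_scaleR_left outer_mv)
    have XX: "X *v (X *v y) = X' *v (X' *v y) + (c * (x \<bullet> y)) *\<^sub>R x" for y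
    proof -
      have xx: "x \<bullet> x = 1" using nx by (simp add: norm_eq_1)
      have "X *v (X *v y) = X' *v (X' *v y) + (sqrt c * (x \<bullet> y)) *\<^sub>R (X' *v x)
          + (sqrt c * (x \<bullet> (X' *v y)) + sqrt c * (sqrt c * (x \<bullet> y)) * (x \<bullet> x)) *\<^sub>R x"
        unfolding Xv by (simp add: matrix_vector_right_distrib matrix_vector_mult_scaleR inner_add_right
            scaleR_add_left algebra_simps)
      also have "\<dots> = X' *v (X' *v y) + (c * (x \<bullet> y)) *\<^sub>R x"
        using X'x xX'y xx c0 by simp
      finally show ?thesis .
    qed
    have psdX: "psd X"
    proof -
      have "transpose X = X" using X' by (simp add: X_def psd_def transpose_add_cart transpose_scaleR_cart outer_transpose)
      moreover have "0 \<le> y \<bullet> (X *v y)" for y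
      proof -
        have "y \<bullet> (X *v y) = y \<bullet> (X' *v y) + sqrt c * (x \<bullet> y) * (x \<bullet> y)"
          by (simp add: Xv inner_add_right inner_commute)
        moreover have "0 \<le> y \<bullet> (X' *v y)" using X' by (simp add: psd_def)
        moreover have "0 \<le> sqrt c * (x \<bullet> y) * (x \<bullet> y)" using c0 by (simp add: mult.assoc)
        ultimately show ?thesis by simp
      qed
      ultimately show ?thesis by (simp add: psd_def)
    qed
    show ?thesis
    proof (intro exI conjI ballI allI impI)
      show "psd X" by (rule psdX)
    next
      fix y assume yW: "y \<in> W"
      let ?y' = "y - (y \<bullet> x) *\<^sub>R x"
      have y'W: "?y' \<in> ?W'" using decomp_perp(2)[OF nx] yW xW sub by (simp add: subspace_diff subspace_scale)
      have "X' *v (X' *v y) = X' *v (X' *v ?y')"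
        using X'x by (simp add: matrix_vector_right_distrib[symmetric] matrix_vector_mult_diff_distrib
            matrix_vector_mult_scaleR)
      also have "\<dots> = A *v ?y'" using X'W y'W by blast
      also have "\<dots> = A *v y - (c * (y \<bullet> x)) *\<^sub>R x"
      proof -
        have exc: "A *v x = c *\<^sub>R x" using ex c_def by simp
        then show ?thesis by (simp add: matrix_vector_mult_diff_distrib matrix_vector_mult_scaleR mult.commute)
      qed
      finally show "X *v (X *v y) = A *v y" unfolding XX by (simp add: inner_commute)
    next
      fix y assume perp: "\<forall>w\<in>W. w \<bullet> y = 0"
      then have "X' *v y = 0" using X'0 by auto
      moreover have "x \<bullet> y = 0" using perp xW by blast
      ultimately show "X *v y = 0" by (simp add: Xv)
    qed
  qed
qed

lemma sqrt_exists:
  fixes A :: "real^'n^'n"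
  assumes A: "psd A"
  shows "\<exists>X. psd X \<and> X ** X = A"
proof -
  have "inv_sub A UNIV" by (simp add: inv_sub_def)
  from sqrt_exists_aux[OF A this] obtain X where "psd X" "\<forall>y. X *v (X *v y) = A *v y" by blast
  then show ?thesis by (auto simp: matrix_eq matrix_vector_mul_assoc)
qed

lemma mat_sqrt_eq:
  fixes A :: "real^'n^'n"
  assumes A: "psd A"
  shows "psd (mat_sqrt A) \<and> mat_sqrt A ** mat_sqrt A = A"
proof -
  obtain X where X: "psd X" "X ** X = A" using sqrt_exists[OF A] by blast
  have sym: "transpose A = A" using A by (simp add: psd_def)
  have "mat_sqrt A = X"
    unfolding mat_sqrt_def
  proof (rule the_equality)
    show "transpose X = X \<and> (\<forall>x. 0 \<le> x \<bullet> (X *v x)) \<and> X ** X = A" using X by (simp add: psd_def)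
  next
    fix S assume "transpose S = S \<and> (\<forall>x. 0 \<le> x \<bullet> (S *v x)) \<and> S ** S = A"
    then show "S = X" using sqrt_unique[OF sym _ X(1) _ X(2)] by (simp add: psd_def)
  qed
  then show ?thesis using X by simp
qed


lemma mm_add_rdistrib: "(A + B) ** C = A ** C + B ** (C :: 'a::semiring_1^'k^'n)"
  by (simp add: matrix_matrix_mult_def Finite_Cartesian_Product.vec_eq_iff sum.distrib distrib_right)

lemma mm_scaleR_left: "(c *\<^sub>R A) ** B = c *\<^sub>R (A ** (B :: real^'k^'n))"
  by (simp add: matrix_matrix_mult_def Finite_Cartesian_Product.vec_eq_iff sum_distrib_left mult.assoc)

lemma mm_scaleR_right: "A ** (c *\<^sub>R B) = c *\<^sub>R (A ** (B :: real^'k^'n))"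
  by (simp add: matrix_matrix_mult_def Finite_Cartesian_Product.vec_eq_iff sum_distrib_left mult_ac)

lemma bilinear_mmult: "bilinear ((**) :: real^'n^'m \<Rightarrow> real^'k^'n \<Rightarrow> real^'k^'m)"
  unfolding bilinear_def
proof (intro allI conjI)
  fix x :: "real^'n^'m" and y :: "real^'k^'n"
  show "linear (\<lambda>x. x ** y)" by (rule linearI) (simp_all add: mm_add_rdistrib mm_scaleR_left)
  show "linear ((**) x)" by (rule linearI) (simp_all add: matrix_add_ldistrib mm_scaleR_right)
qed

lemma bounded_bilinear_mmult: "bounded_bilinear ((**) :: real^'n^'m \<Rightarrow> real^'k^'n \<Rightarrow> real^'k^'m)"
  using bilinear_mmult bilinear_conv_bounded_bilinear by blast

lemma hvd_mmult:
  fixes f :: "real \<Rightarrow> real^'n^'m" and g :: "real \<Rightarrow> real^'k^'n"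
  assumes "(f has_vector_derivative f') (at x)" "(g has_vector_derivative g') (at x)"
  shows "((\<lambda>t. f t ** g t) has_vector_derivative (f x ** g' + f' ** g x)) (at x)"
  by (rule bounded_bilinear.has_vector_derivative[OF bounded_bilinear_mmult assms])

lemma bounded_linear_transpose: "bounded_linear (transpose :: real^'n^'m \<Rightarrow> real^'m^'n)"
  unfolding linear_conv_bounded_linear[symmetric] by (rule linearI) (simp_all add: transpose_def Finite_Cartesian_Product.vec_eq_iff)

lemma hvd_transpose:
  fixes f :: "real \<Rightarrow> real^'n^'m"
  assumes "(f has_vector_derivative f') (at x)"
  shows "((\<lambda>t. transpose (f t)) has_vector_derivative transpose f') (at x)"
  by (rule bounded_linear.has_vector_derivative[OF bounded_linear_transpose assms])

lemma hvd_vec: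
  fixes f :: "real \<Rightarrow> 'a::euclidean_space^'n"
  assumes "\<And>i. ((\<lambda>t. f t $ i) has_vector_derivative D $ i) (at x)"
  shows "(f has_vector_derivative D) (at x)"
  unfolding has_vector_derivative_def
proof (rule has_derivative_componentwise_within[THEN iffD2], intro ballI)
  fix b :: "'a^'n" assume b: "b \<in> Basis"
  obtain i u where bu: "b = axis i u" "u \<in> Basis" using b unfolding Basis_vec_def by blast
  have "((\<lambda>t. f t $ i) has_derivative (\<lambda>h. h *\<^sub>R D $ i)) (at x within UNIV)"
    using assms[of i] by (simp add: has_vector_derivative_def)
  from has_derivative_componentwise_within[THEN iffD1, OF this] bu(2)
  have "((\<lambda>t. f t $ i \<bullet> u) has_derivative (\<lambda>h. (h *\<^sub>R D $ i) \<bullet> u)) (at x within UNIV)"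
    by (rule bspec)
  then show "((\<lambda>t. f t \<bullet> b) has_derivative (\<lambda>h. (h *\<^sub>R D) \<bullet> b)) (at x within UNIV)"
    unfolding bu(1) inner_axis by simp
qed

lemma hvd_mat:
  fixes f :: "real \<Rightarrow> real^'n^'m"
  assumes "\<And>i j. ((\<lambda>t. f t $ i $ j) has_vector_derivative D $ i $ j) (at x)"
  shows "(f has_vector_derivative D) (at x)"
  by (intro hvd_vec assms)


lemma analytic_line_sums:
  fixes f :: "real^'d \<Rightarrow> real"
  assumes "real_analytic_on f S" "\<mu> \<in> S"
  obtains r a where "r > 0" "\<And>t. \<bar>t\<bar> < r \<Longrightarrow> (\<lambda>n. a n * t ^ n) sums f (\<mu> + t *\<^sub>R axis k 1)"
proof -
  obtain r c where r: "r > 0" and hs: "\<And>x. x \<in> ball \<mu> r \<Longrightarrow>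
      ((\<lambda>\<alpha>. c \<alpha> * (\<Prod>i\<in>UNIV. (x $ i - \<mu> $ i) ^ \<alpha> i)) has_sum f x) UNIV"
    using assms unfolding real_analytic_on_def by blast
  define e :: "nat \<Rightarrow> 'd \<Rightarrow> nat" where "e n = (\<lambda>i. if i = k then n else 0)" for n
  have inje: "inj e"
  proof (rule injI)
    fix m n assume "e m = e n"
    then have "e m k = e n k" by simp
    then show "m = n" by (simp add: e_def)
  qed
  have "(\<lambda>n. c (e n) * t ^ n) sums f (\<mu> + t *\<^sub>R axis k 1)" if t: "\<bar>t\<bar> < r" for t
  proof -
    let ?x = "\<mu> + t *\<^sub>R axis k 1"
    have xb: "?x \<in> ball \<mu> r" using t by (simp add: dist_norm)
    have comp: "?x $ i - \<mu> $ i = (if i = k then t else 0)" for i by (simp add: axis_def)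
    let ?g = "\<lambda>\<alpha>. c \<alpha> * (\<Prod>i\<in>UNIV. (?x $ i - \<mu> $ i) ^ \<alpha> i)"
    have h1: "(?g has_sum f ?x) UNIV" by (rule hs[OF xb])
    have h2: "(?g has_sum f ?x) (range e)"
    proof (subst has_sum_cong_neutral[of UNIV "range e" ?g ?g])
      show "?g \<alpha> = 0" if "\<alpha> \<in> UNIV - range e" for \<alpha>
      proof -
        have "\<exists>i. i \<noteq> k \<and> \<alpha> i \<noteq> 0"
        proof (rule ccontr)
          assume "\<not> ?thesis"
          then have "\<alpha> = e (\<alpha> k)" by (auto simp: e_def fun_eq_iff)
          then show False using that by auto
        qed
        then obtain i where "i \<noteq> k" "\<alpha> i \<noteq> 0" by blast
        then have "(?x $ i - \<mu> $ i) ^ \<alpha> i = 0" by (simp add: axis_def)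
        then have "(\<Prod>i\<in>UNIV. (?x $ i - \<mu> $ i) ^ \<alpha> i) = 0"
          by (intro prod_zero) auto
        then show ?thesis by simp
      qed
    qed (use h1 in auto)
    then have hs2: "((?g \<circ> e) has_sum f ?x) UNIV" using has_sum_reindex[OF inj_on_subset[OF inje]] by auto
    have eq: "(?g \<circ> e) = (\<lambda>n. c (e n) * t ^ n)"
    proof (rule ext)
      fix n
      have p1: "(\<Prod>i\<in>UNIV. (?x $ i - \<mu> $ i) ^ e n i) = (\<Prod>i\<in>UNIV. if i = k then t ^ n else 1)"
        by (rule prod.cong) (auto simp: comp e_def)
      have p2: "(\<Prod>i\<in>UNIV. if i = k then t ^ n else (1::real)) = t ^ n" by simp
      show "(?g \<circ> e) n = c (e n) * t ^ n" by (simp only: o_def p1 p2)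
    qed
    from hs2 have "((\<lambda>n. c (e n) * t ^ n) has_sum f ?x) UNIV" unfolding eq .
    then show ?thesis by (rule has_sum_imp_sums)
  qed
  then show ?thesis by (rule that[OF r])
qed

lemma analytic_partial:
  fixes f :: "real^'d \<Rightarrow> real"
  assumes "real_analytic_on f S" "\<mu> \<in> S"
  shows "((\<lambda>t. f (\<mu> + t *\<^sub>R axis k 1)) has_vector_derivative partial_deriv k f \<mu>) (at 0)"
proof -
  obtain r a where r: "r > 0" and sm: "\<And>t. \<bar>t\<bar> < r \<Longrightarrow> (\<lambda>n. a n * t ^ n) sums f (\<mu> + t *\<^sub>R axis k 1)"
    using analytic_line_sums[OF assms] by blast
  have "((\<lambda>z. \<Sum>n. a n * z^n) has_field_derivative (\<Sum>n. diffs a n * 0^n)) (at 0)"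
  proof (rule termdiffs_strong'[of r])
    show "summable (\<lambda>n. a n * z ^ n)" if "norm z < r" for z :: real
      using sm[of z] that by (auto simp: sums_iff)
  qed (use r in simp)
  then have d: "((\<lambda>z. \<Sum>n. a n * z^n) has_vector_derivative (\<Sum>n. diffs a n * 0^n)) (at 0)"
    by (simp add: has_real_derivative_iff_has_vector_derivative)
  have "((\<lambda>t. f (\<mu> + t *\<^sub>R axis k 1)) has_vector_derivative (\<Sum>n. diffs a n * 0^n)) (at 0)"
  proof (rule has_vector_derivative_transform_within_open[OF d, of "ball 0 r"])
    show "(\<Sum>n. a n * y^n) = f (\<mu> + y *\<^sub>R axis k 1)" if "y \<in> ball 0 r" for y
      using sm[of y] that by (simp add: sums_iff)
  qed (use r in auto)
  then show ?thesis unfolding partial_deriv_def using vector_derivative_at by (metis (no_types))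
qed


definition Wm :: "nat \<Rightarrow> (nat \<Rightarrow> real) \<Rightarrow> real Matrix.mat" where
  "Wm M lam = Matrix.mat M M (\<lambda>(j,k). lam (Suc j) ^ Suc k)"

definition Gm :: "nat \<Rightarrow> (nat \<Rightarrow> real) \<Rightarrow> (nat \<Rightarrow> real) \<Rightarrow> real Matrix.mat" where
  "Gm M m lam = Matrix.mat M M (\<lambda>(k,l). \<Sum>j\<in>{1..M}. m j * lam j ^ (k + l + 2))"

lemma Wm_carrier: "Wm M lam \<in> carrier_mat M M" by (simp add: Wm_def)

lemma sum_shift_1M: "(\<Sum>j\<in>{1..M}. f j) = (\<Sum>j<M. f (Suc j :: nat))"
proof -
  have "{1..M} = Suc ` {..<M}" by (simp add: image_Suc_lessThan)
  then show ?thesis by (simp add: sum.reindex)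
qed

lemma prod_shift_1M: "(\<Prod>j\<in>{1..M}. f j) = (\<Prod>j<M. f (Suc j :: nat))"
proof -
  have "{1..M} = Suc ` {..<M}" by (simp add: image_Suc_lessThan)
  then show ?thesis by (simp add: prod.reindex)
qed

lemma det_Gm: "Determinant.det (Gm M m lam) = (\<Prod>j\<in>{1..M}. m j) * Determinant.det (Wm M lam) ^ 2"
proof -
  define W2 where "W2 = Matrix.mat M M (\<lambda>(j,l). m (Suc j) * lam (Suc j) ^ Suc l)"
  have W2c: "W2 \<in> carrier_mat M M" by (simp add: W2_def)
  have G: "Gm M m lam = transpose_mat (Wm M lam) * W2"
  proof (rule eq_matI)
    fix k l assume kl: "k < dim_row (transpose_mat (Wm M lam) * W2)" "l < dim_col (transpose_mat (Wm M lam) * W2)"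
    then have k: "k < M" and l: "l < M" by (auto simp: Wm_def W2_def)
    have "(transpose_mat (Wm M lam) * W2) $$ (k, l) = (\<Sum>j<M. lam (Suc j) ^ Suc k * (m (Suc j) * lam (Suc j) ^ Suc l))"
      using k l by (simp add: Wm_def W2_def scalar_prod_def atLeast0LessThan)
    also have "\<dots> = (\<Sum>j<M. m (Suc j) * lam (Suc j) ^ (k + l + 2))"
      by (intro sum.cong) (auto simp: power_add mult_ac)
    also have "\<dots> = (\<Sum>j\<in>{1..M}. m j * lam j ^ (k + l + 2))"
      by (rule sum_shift_1M[symmetric])
    also have "\<dots> = Gm M m lam $$ (k, l)"
      using k l by (simp add: Gm_def)
    finally show "Gm M m lam $$ (k, l) = (transpose_mat (Wm M lam) * W2) $$ (k, l)" by simp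
  qed (auto simp: Gm_def Wm_def W2_def)
  have dW2: "Determinant.det W2 = (\<Prod>j\<in>{1..M}. m j) * Determinant.det (Wm M lam)"
  proof -
    have "Determinant.det W2 = (\<Sum>p\<in>{p. p permutes {0..<M}}. signof p * (\<Prod>i = 0..<M. W2 $$ (i, p i)))"
      by (rule det_def'[OF W2c])
    also have "\<dots> = (\<Sum>p\<in>{p. p permutes {0..<M}}. (\<Prod>i<M. m (Suc i)) * (signof p * (\<Prod>i = 0..<M. Wm M lam $$ (i, p i))))"
    proof (intro sum.cong refl)
      fix p assume "p \<in> {p. p permutes {0..<M}}"
      then have pp: "p permutes {0..<M}" by simp
      have "(\<Prod>i = 0..<M. W2 $$ (i, p i)) = (\<Prod>i = 0..<M. m (Suc i) * Wm M lam $$ (i, p i))"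
        using pp by (intro prod.cong refl) (auto simp: W2_def Wm_def permutes_in_image)
      also have "\<dots> = (\<Prod>i<M. m (Suc i)) * (\<Prod>i = 0..<M. Wm M lam $$ (i, p i))"
        by (simp add: prod.distrib atLeast0LessThan)
      finally show "signof p * (\<Prod>i = 0..<M. W2 $$ (i, p i)) = (\<Prod>i<M. m (Suc i)) * (signof p * (\<Prod>i = 0..<M. Wm M lam $$ (i, p i)))"
        by simp
    qed
    also have "\<dots> = (\<Prod>i<M. m (Suc i)) * Determinant.det (Wm M lam)"
      by (simp add: det_def'[OF Wm_carrier] sum_distrib_left)
    finally show ?thesis by (simp only: prod_shift_1M)
  qed
  have "Determinant.det (Gm M m lam) = Determinant.det (transpose_mat (Wm M lam)) * Determinant.det W2"
    unfolding G by (rule det_mult[OF _ W2c]) (simp add: Wm_def)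
  also have "\<dots> = Determinant.det (Wm M lam) * Determinant.det W2"
    by (simp add: det_transpose[OF Wm_carrier])
  finally show ?thesis by (simp add: dW2 power2_eq_square)
qed

lemma det_Wm_nonzero:
  assumes nz: "\<And>j. j \<in> {1..M} \<Longrightarrow> lam j \<noteq> 0" and inj: "inj_on lam {1..M}"
  shows "Determinant.det (Wm M lam) \<noteq> 0"
proof
  assume "Determinant.det (Wm M lam) = 0"
  then obtain v where v: "v \<in> carrier_vec M" "v \<noteq> 0\<^sub>v M" "Wm M lam *\<^sub>v v = 0\<^sub>v M"
    using det_0_iff_vec_prod_zero[OF Wm_carrier] by blast
  define q where "q = (\<Sum>k<M. monom (vec_index v k) (Suc k))"
  have polyq: "poly q x = (\<Sum>k<M. vec_index v k * x ^ Suc k)" for x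
    by (simp add: q_def poly_sum poly_monom)
  have cq: "coeff q (Suc k) = vec_index v k" if "k < M" for k
    using that by (simp add: q_def coeff_sum)
  obtain k where k: "k < M" "vec_index v k \<noteq> 0" using v(1,2) by (auto simp: Matrix.vec_eq_iff)
  have q0: "q \<noteq> 0" using cq[OF k(1)] k(2) by auto
  have dq: "degree q \<le> M"
    unfolding q_def by (rule degree_sum_le) (auto intro: order.trans[OF degree_monom_le])
  have roots: "insert 0 (lam ` {1..M}) \<subseteq> {x. poly q x = 0}"
  proof
    fix x assume "x \<in> insert 0 (lam ` {1..M})"
    then show "x \<in> {x. poly q x = 0}"
    proof
      assume "x = 0" then show ?thesis by (simp add: polyq)
    next
      assume "x \<in> lam ` {1..M}"
      then obtain j where j: "j \<in> {1..M}" "x = lam j" by blast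
      then have jl: "j - 1 < M" "Suc (j - 1) = j" by auto
      have "vec_index (Wm M lam *\<^sub>v v) (j - 1) = 0" using v(3) jl by simp
      moreover have "vec_index (Wm M lam *\<^sub>v v) (j - 1) = (\<Sum>k<M. lam j ^ Suc k * vec_index v k)"
        using jl v(1) by (simp add: Wm_def scalar_prod_def atLeast0LessThan)
      ultimately show ?thesis using j by (simp add: polyq mult.commute)
    qed
  qed
  have "card (insert 0 (lam ` {1..M})) = Suc M"
    using nz inj by (subst card_insert_disjoint) (auto simp: card_image)
  moreover have "card (insert 0 (lam ` {1..M})) \<le> card {x. poly q x = 0}"
    by (rule card_mono[OF poly_roots_finite[OF q0] roots])
  moreover have "card {x. poly q x = 0} \<le> degree q" by (rule card_poly_roots_bound[OF q0])
  ultimately show False using dq by simp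
qed

lemma abs_signof: "\<bar>signof p :: real\<bar> = 1"
  by (simp add: sign_def)

lemma det_bound:
  fixes A :: "real Matrix.mat"
  assumes A: "A \<in> carrier_mat M M" and r: "r < M"
    and c0: "\<And>k. k < M \<Longrightarrow> c k \<ge> 0" and e0: "e \<ge> 0"
    and bA: "\<And>i k. i < M \<Longrightarrow> i \<noteq> r \<Longrightarrow> k < M \<Longrightarrow> \<bar>A $$ (i, k)\<bar> \<le> c k"
    and br: "\<And>k. k < M \<Longrightarrow> \<bar>A $$ (r, k)\<bar> \<le> e * c k"
  shows "\<bar>Determinant.det A\<bar> \<le> fact M * e * (\<Prod>k<M. c k)"
proof -
  let ?P = "{p. p permutes {0..<M}}"
  have "\<bar>Determinant.det A\<bar> = \<bar>\<Sum>p\<in>?P. signof p * (\<Prod>i = 0..<M. A $$ (i, p i))\<bar>"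
    by (simp add: det_def'[OF A])
  also have "\<dots> \<le> (\<Sum>p\<in>?P. \<bar>signof p * (\<Prod>i = 0..<M. A $$ (i, p i))\<bar>)"
    by (rule sum_abs)
  also have "\<dots> \<le> (\<Sum>p\<in>?P. e * (\<Prod>k<M. c k))"
  proof (rule sum_mono)
    fix p assume "p \<in> ?P"
    then have pp: "p permutes {0..<M}" by simp
    have pin: "p i < M" if "i < M" for i using permutes_in_image[OF pp] that by auto
    have "\<bar>signof p * (\<Prod>i = 0..<M. A $$ (i, p i))\<bar> = (\<Prod>i = 0..<M. \<bar>A $$ (i, p i)\<bar>)"
      by (simp add: abs_mult abs_signof abs_prod)
    also have "\<dots> \<le> (\<Prod>i = 0..<M. (if i = r then e else 1) * c (p i))"
    proof (rule prod_mono)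
      fix i assume i: "i \<in> {0..<M}"
      show "0 \<le> \<bar>A $$ (i, p i)\<bar> \<and> \<bar>A $$ (i, p i)\<bar> \<le> (if i = r then e else 1) * c (p i)"
        using i bA br pin by auto
    qed
    also have "\<dots> = (\<Prod>i = 0..<M. (if i = r then e else 1)) * (\<Prod>i = 0..<M. c (p i))"
      by (rule prod.distrib)
    also have "(\<Prod>i = 0..<M. (if i = r then e else 1)) = e"
      using r by (simp add: prod.delta)
    also have "(\<Prod>i = 0..<M. c (p i)) = (\<Prod>k = 0..<M. c k)"
      using prod.permute[OF pp, of c] by (simp add: o_def)
    finally show "\<bar>signof p * (\<Prod>i = 0..<M. A $$ (i, p i))\<bar> \<le> e * (\<Prod>k<M. c k)"
      by (simp add: atLeast0LessThan)
  qed
  also have "\<dots> = fact M * e * (\<Prod>k<M. c k)"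
    by (simp add: card_permutations)
  finally show ?thesis .
qed

lemma abs_power_diff_bound:
  fixes x y L :: real
  assumes "\<bar>x\<bar> \<le> L" "\<bar>y\<bar> \<le> L"
  shows "\<bar>x ^ Suc n - y ^ Suc n\<bar> \<le> real (Suc n) * L ^ n * \<bar>x - y\<bar>"
proof (induction n)
  case 0 then show ?case by simp
next
  case (Suc n)
  have L0: "L \<ge> 0" using assms by linarith
  have "x ^ Suc (Suc n) - y ^ Suc (Suc n) = x * (x ^ Suc n - y ^ Suc n) + y ^ Suc n * (x - y)"
    by (simp add: algebra_simps)
  then have "\<bar>x ^ Suc (Suc n) - y ^ Suc (Suc n)\<bar> \<le> \<bar>x\<bar> * \<bar>x ^ Suc n - y ^ Suc n\<bar> + \<bar>y\<bar> ^ Suc n * \<bar>x - y\<bar>"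
    by (simp add: abs_mult power_abs abs_triangle_ineq[THEN order.trans])
  also have "\<dots> \<le> L * (real (Suc n) * L ^ n * \<bar>x - y\<bar>) + L ^ Suc n * \<bar>x - y\<bar>"
    using Suc.IH assms L0 by (intro add_mono mult_mono power_mono) auto
  also have "\<dots> = real (Suc (Suc n)) * L ^ Suc n * \<bar>x - y\<bar>" by (simp add: algebra_simps)
  finally show ?case .
qed

lemma abs_pow_le: "\<bar>x\<bar> \<le> L \<Longrightarrow> \<bar>x ^ n\<bar> \<le> (L::real) ^ n"
  unfolding power_abs by (rule power_mono) auto

lemma dim_Wm [simp]: "dim_row (Wm M lam) = M" "dim_col (Wm M lam) = M"
  by (simp_all add: Wm_def)

lemma Wm_entry: "i < M \<Longrightarrow> k < M \<Longrightarrow> Wm M lam $$ (i, k) = lam (Suc i) ^ Suc k"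
  by (simp add: Wm_def)

lemma Wm_entry_bound:
  assumes "i < M" "k < M" "\<bar>lam (Suc i)\<bar> \<le> L"
  shows "\<bar>Wm M lam $$ (i, k)\<bar> \<le> L ^ Suc k"
  apply (subst Wm_entry[OF assms(1,2)])
  apply (rule abs_pow_le[OF assms(3)])
  done

lemma det_Wm_bound_all:
  assumes M: "M > 0" and L: "L > 0" and lam: "\<And>j. j \<in> {1..M} \<Longrightarrow> \<bar>lam j\<bar> \<le> L"
  shows "\<bar>Determinant.det (Wm M lam)\<bar> \<le> fact M * (\<Prod>k<M. L ^ Suc k)"
proof -
  have b: "\<bar>Wm M lam $$ (i, k)\<bar> \<le> L ^ Suc k" if "i < M" "k < M" for i k
    using that lam[of "Suc i"] by (intro Wm_entry_bound) auto
  have "\<bar>Determinant.det (Wm M lam)\<bar> \<le> fact M * 1 * (\<Prod>k<M. L ^ Suc k)"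
  proof (rule det_bound[OF Wm_carrier M])
    show "\<bar>Wm M lam $$ (i, k)\<bar> \<le> L ^ Suc k" if "i < M" "i \<noteq> 0" "k < M" for i k
      using b that by blast
    show "\<bar>Wm M lam $$ (0, k)\<bar> \<le> 1 * L ^ Suc k" if "k < M" for k
      using b[OF M that] by simp
  qed (use L in auto)
  then show ?thesis by simp
qed

lemma det_Wm_bound_one:
  assumes M: "M > 0" and L: "L > 0" and lam: "\<And>j. j \<in> {1..M} \<Longrightarrow> \<bar>lam j\<bar> \<le> L"
    and j: "j \<in> {1..M}"
  shows "\<bar>Determinant.det (Wm M lam)\<bar> \<le> fact M * (\<bar>lam j\<bar> / L) * (\<Prod>k<M. L ^ Suc k)"
proof (rule det_bound[OF Wm_carrier, of "j - 1"])
  show "j - 1 < M" using j by auto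
  show "\<bar>Wm M lam $$ (i, k)\<bar> \<le> L ^ Suc k" if "i < M" "i \<noteq> j - 1" "k < M" for i k
    using that lam[of "Suc i"] by (intro Wm_entry_bound) auto
  show "\<bar>Wm M lam $$ (j - 1, k)\<bar> \<le> \<bar>lam j\<bar> / L * L ^ Suc k" if "k < M" for k
  proof -
    have jj: "Suc (j - 1) = j" using j by auto
    have "\<bar>Wm M lam $$ (j - 1, k)\<bar> = \<bar>lam j\<bar> * \<bar>lam j\<bar> ^ k"
      using that j jj by (simp add: Wm_entry power_abs abs_mult)
    also have "\<dots> \<le> \<bar>lam j\<bar> * L ^ k"
      using lam[OF j] by (intro mult_left_mono power_mono) auto
    also have "\<dots> = \<bar>lam j\<bar> / L * L ^ Suc k" using L by simp
    finally show ?thesis .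
  qed
qed (use L in auto)

lemma det_Wm_bound_two:
  assumes M: "M > 0" and L: "L > 0" and lam: "\<And>j. j \<in> {1..M} \<Longrightarrow> \<bar>lam j\<bar> \<le> L"
    and i: "i \<in> {1..M}" and j: "j \<in> {1..M}" and ij: "i \<noteq> j"
  shows "\<bar>Determinant.det (Wm M lam)\<bar> \<le> fact M * (real M * \<bar>lam i - lam j\<bar> / L) * (\<Prod>k<M. L ^ Suc k)"
proof -
  let ?A = "addrow (-1) (i - 1) (j - 1) (Wm M lam)"
  have Ac: "?A \<in> carrier_mat M M" using Wm_carrier by simp
  have ii: "Suc (i - 1) = i" "i - 1 < M" using i by auto
  have jj: "Suc (j - 1) = j" "j - 1 < M" using j by auto
  have ij': "i - 1 \<noteq> j - 1" using i j ij by auto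
  have "Determinant.det ?A = Determinant.det (Wm M lam)"
    by (rule det_addrow[OF jj(2) ij' Wm_carrier])
  moreover have "\<bar>Determinant.det ?A\<bar> \<le> fact M * (real M * \<bar>lam i - lam j\<bar> / L) * (\<Prod>k<M. L ^ Suc k)"
  proof (rule det_bound[OF Ac ii(2)])
    show "\<bar>?A $$ (r, k)\<bar> \<le> L ^ Suc k" if "r < M" "r \<noteq> i - 1" "k < M" for r k
      using that lam[of "Suc r"] Wm_entry_bound[of r M k lam L] by (simp add: index_mat_addrow)
    show "\<bar>?A $$ (i - 1, k)\<bar> \<le> real M * \<bar>lam i - lam j\<bar> / L * L ^ Suc k" if "k < M" for k
    proof -
      have "\<bar>?A $$ (i - 1, k)\<bar> = \<bar>lam i ^ Suc k - lam j ^ Suc k\<bar>"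
        using that ii jj by (simp add: Wm_entry index_mat_addrow)
      also have "\<dots> \<le> real (Suc k) * L ^ k * \<bar>lam i - lam j\<bar>"
        by (rule abs_power_diff_bound[OF lam[OF i] lam[OF j]])
      also have "\<dots> \<le> real M * L ^ k * \<bar>lam i - lam j\<bar>"
        using that L by (intro mult_right_mono) auto
      also have "\<dots> = real M * \<bar>lam i - lam j\<bar> / L * L ^ Suc k" using L by simp
      finally show ?thesis .
    qed
  qed (use L in auto)
  ultimately show ?thesis by simp
qed


lemma pf_sum: "finite A \<Longrightarrow> (\<And>a. a \<in> A \<Longrightarrow> poly_fun (f a)) \<Longrightarrow> poly_fun (\<lambda>x. \<Sum>a\<in>A. f a x)"
proof (induction A rule: finite_induct)
  case empty then show ?case using pf_const[of 0] by simp
next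
  case (insert a A) then show ?case by (simp add: pf_add)
qed

lemma pf_prod: "finite A \<Longrightarrow> (\<And>a. a \<in> A \<Longrightarrow> poly_fun (f a)) \<Longrightarrow> poly_fun (\<lambda>x. \<Prod>a\<in>A. f a x)"
proof (induction A rule: finite_induct)
  case empty then show ?case using pf_const[of 1] by simp
next
  case (insert a A) then show ?case by (simp add: pf_mult)
qed

lemma pf_cmult: "poly_fun p \<Longrightarrow> poly_fun (\<lambda>x. c * p x)"
  by (rule pf_mult[OF pf_const])

lemma pf_nth: "poly_fun (\<lambda>x::real^'d. x $ k)"
proof -
  have "poly_fun (\<lambda>x::real^'d. x \<bullet> axis k 1)" by (rule pf_coord) simp
  then show ?thesis by (simp add: cart_eq_inner_axis)
qed

definition pe :: "(real^'d \<Rightarrow> real^'n^'m) \<Rightarrow> bool" where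
  "pe F \<longleftrightarrow> (\<forall>a c. poly_fun (\<lambda>x. F x $ a $ c))"

lemma pe_const: "pe (\<lambda>x. A)" by (simp add: pe_def pf_const)

lemma pe_mult: "pe F \<Longrightarrow> pe G \<Longrightarrow> pe (\<lambda>x. F x ** G x)"
  unfolding pe_def matrix_matrix_mult_def by (auto intro!: pf_sum pf_mult)

lemma pe_neg: "pe F \<Longrightarrow> pe (\<lambda>x. - F x)"
proof -
  assume F: "pe F"
  have "poly_fun (\<lambda>x. (- F x) $ a $ c)" for a c
  proof -
    have p: "poly_fun (\<lambda>x. F x $ a $ c)" using F by (simp add: pe_def)
    have "poly_fun (\<lambda>x. (-1) * (F x $ a $ c))" by (rule pf_cmult[OF p])
    then show ?thesis by simp
  qed
  then show ?thesis by (simp add: pe_def)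
qed

lemma pe_Jmu: "pe (Jmu J)"
proof -
  have "Jmu J x $ a $ c = (\<Sum>k\<in>UNIV. x $ k * (J k $ a $ c))" for x a c
    by (simp add: Jmu_def sum_component)
  then show ?thesis unfolding pe_def by (auto intro!: pf_sum pf_mult pf_nth pf_const)
qed

fun mpw :: "real^'n^'n \<Rightarrow> nat \<Rightarrow> real^'n^'n" where
  "mpw A 0 = mat 1"
| "mpw A (Suc p) = A ** mpw A p"

lemma pe_mpw: "pe F \<Longrightarrow> pe (\<lambda>x. mpw (F x) q)"
  by (induction q) (auto intro: pe_const pe_mult)

lemma pf_trace: "pe F \<Longrightarrow> poly_fun (\<lambda>x. trace (F x))"
  unfolding pe_def trace_def by (auto intro!: pf_sum)

definition Sm :: "('d::finite \<Rightarrow> real^'n::finite^'n) \<Rightarrow> real^'d \<Rightarrow> real^'n^'n" where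
  "Sm J \<mu> = - (Jmu J \<mu> ** Jmu J \<mu>)"

definition H0 :: "('d::finite \<Rightarrow> real^'n::finite^'n) \<Rightarrow> nat \<Rightarrow> real^'d \<Rightarrow> real" where
  "H0 J M \<mu> = Determinant.det (Matrix.mat M M (\<lambda>(k,l). trace (mpw (Sm J \<mu>) (k + l + 2))))"

lemma H0_expand:
  "H0 J M \<mu> = (\<Sum>p\<in>{p. p permutes {0..<M}}. signof p * (\<Prod>i = 0..<M. trace (mpw (Sm J \<mu>) (i + p i + 2))))"
proof -
  have "H0 J M \<mu> = (\<Sum>p\<in>{p. p permutes {0..<M}}. signof p *
      (\<Prod>i = 0..<M. Matrix.mat M M (\<lambda>(k,l). trace (mpw (Sm J \<mu>) (k + l + 2))) $$ (i, p i)))"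
    unfolding H0_def by (rule det_def') simp
  also have "\<dots> = (\<Sum>p\<in>{p. p permutes {0..<M}}. signof p * (\<Prod>i = 0..<M. trace (mpw (Sm J \<mu>) (i + p i + 2))))"
  proof (intro sum.cong refl arg_cong2[where f = "(*)"] prod.cong)
    fix p i assume "p \<in> {p. p permutes {0..<M}}" "i \<in> {0..<M}"
    then have "i < M" "p i < M" using permutes_in_image[of p "{0..<M}" i] by auto
    then show "Matrix.mat M M (\<lambda>(k,l). trace (mpw (Sm J \<mu>) (k + l + 2))) $$ (i, p i) = trace (mpw (Sm J \<mu>) (i + p i + 2))"
      by simp
  qed
  finally show ?thesis .
qed

lemma pf_H0: "poly_fun (H0 J M)"
proof -
  have pS: "pe (Sm J)" unfolding Sm_def[abs_def] by (intro pe_neg pe_mult pe_Jmu)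
  have "poly_fun (\<lambda>\<mu>. \<Sum>p\<in>{p. p permutes {0..<M}}. signof p * (\<Prod>i = 0..<M. trace (mpw (Sm J \<mu>) (i + p i + 2))))"
    by (intro pf_sum pf_cmult pf_prod pf_trace pe_mpw pS) (auto simp: finite_permutations)
  moreover have "H0 J M = (\<lambda>\<mu>. \<Sum>p\<in>{p. p permutes {0..<M}}. signof p * (\<Prod>i = 0..<M. trace (mpw (Sm J \<mu>) (i + p i + 2))))"
    by (rule ext) (rule H0_expand)
  ultimately show ?thesis by simp
qed

lemma Jmu_scale: "Jmu J (t *\<^sub>R \<mu>) = t *\<^sub>R Jmu J \<mu>"
  by (simp add: Jmu_def scaleR_sum_right)

lemma mm_scaleR_l: "(c *\<^sub>R A) ** B = c *\<^sub>R (A ** (B :: real^'k^'n))"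
  by (simp add: matrix_matrix_mult_def Finite_Cartesian_Product.vec_eq_iff sum_distrib_left mult.assoc)

lemma mm_scaleR_r: "A ** (c *\<^sub>R B) = c *\<^sub>R (A ** (B :: real^'k^'n))"
  by (simp add: matrix_matrix_mult_def Finite_Cartesian_Product.vec_eq_iff sum_distrib_left mult_ac)

lemma Sm_scale: "Sm J (t *\<^sub>R \<mu>) = t\<^sup>2 *\<^sub>R Sm J \<mu>"
  by (simp add: Sm_def Jmu_scale mm_scaleR_l mm_scaleR_r power2_eq_square)

lemma mpw_scale: "mpw (c *\<^sub>R A) q = c ^ q *\<^sub>R mpw A q"
  by (induction q) (simp_all add: mm_scaleR_l mm_scaleR_r)

lemma trace_scale: "trace (c *\<^sub>R A) = c * trace (A :: real^'n^'n)"
  by (simp add: trace_def sum_distrib_left)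

lemma sum_2i2: "(\<Sum>i<n. i) + (\<Sum>i<n. i) + (\<Sum>i<n. (2::nat)) = n * (n + 1)"
  by (induction n) auto

lemma H0_homog: "H0 J M (t *\<^sub>R \<mu>) = t ^ (2 * (M * (M + 1))) * H0 J M \<mu>"
proof -
  have "H0 J M (t *\<^sub>R \<mu>) = (\<Sum>p\<in>{p. p permutes {0..<M}}. t ^ (2 * (M * (M + 1))) * (signof p * (\<Prod>i = 0..<M. trace (mpw (Sm J \<mu>) (i + p i + 2)))))"
    unfolding H0_expand
  proof (intro sum.cong refl)
    fix p assume "p \<in> {p. p permutes {0..<M}}"
    then have pp: "p permutes {0..<M}" by simp
    have "(\<Prod>i = 0..<M. trace (mpw (Sm J (t *\<^sub>R \<mu>)) (i + p i + 2)))
        = (\<Prod>i = 0..<M. (t\<^sup>2) ^ (i + p i + 2) * trace (mpw (Sm J \<mu>) (i + p i + 2)))"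
      by (simp only: Sm_scale mpw_scale trace_scale)
    also have "\<dots> = (\<Prod>i = 0..<M. (t\<^sup>2) ^ (i + p i + 2)) * (\<Prod>i = 0..<M. trace (mpw (Sm J \<mu>) (i + p i + 2)))"
      by (rule prod.distrib)
    also have "(\<Prod>i = 0..<M. (t\<^sup>2) ^ (i + p i + 2)) = (t\<^sup>2) ^ (\<Sum>i = 0..<M. i + p i + 2)"
      by (simp add: power_sum)
    also have "(\<Sum>i = 0..<M. i + p i + 2) = (\<Sum>i = 0..<M. i) + (\<Sum>i = 0..<M. p i) + (\<Sum>i = 0..<M. 2)"
      by (simp only: sum.distrib)
    also have "(\<Sum>i = 0..<M. p i) = (\<Sum>i = 0..<M. i)"
      using sum.permute[OF pp, of "\<lambda>i. i"] by (simp add: o_def)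
    also have "(\<Sum>i = 0..<M. i) + (\<Sum>i = 0..<M. i) + (\<Sum>i = 0..<M. (2::nat)) = M * (M + 1)"
      unfolding atLeast0LessThan by (rule sum_2i2)
    finally have e: "(\<Prod>i = 0..<M. trace (mpw (Sm J (t *\<^sub>R \<mu>)) (i + p i + 2)))
       = (t\<^sup>2) ^ (M * (M + 1)) * (\<Prod>i = 0..<M. trace (mpw (Sm J \<mu>) (i + p i + 2)))" .
    show "signof p * (\<Prod>i = 0..<M. trace (mpw (Sm J (t *\<^sub>R \<mu>)) (i + p i + 2)))
      = t ^ (2 * (M * (M + 1))) * (signof p * (\<Prod>i = 0..<M. trace (mpw (Sm J \<mu>) (i + p i + 2))))"
      unfolding e power_mult by (rule mult.left_commute)
  qed
  also have "\<dots> = t ^ (2 * (M * (M + 1))) * H0 J M \<mu>"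
    by (simp add: H0_expand sum_distrib_left)
  finally show ?thesis .
qed


lemma on_mv: "norm (A *v x) \<le> op_norm A * norm x"
  unfolding op_norm_def by (rule onorm) simp

lemma on_nonneg: "op_norm A \<ge> 0"
  unfolding op_norm_def by (rule onorm_pos_le) simp

lemma on_mult: "op_norm (A ** B) \<le> op_norm A * op_norm (B :: real^'k^'n)"
proof -
  have "(*v) (A ** B) = (*v) A \<circ> (*v) B" by (simp add: fun_eq_iff matrix_vector_mul_assoc)
  then show ?thesis unfolding op_norm_def using onorm_compose[of "(*v) A" "(*v) B"] by simp
qed

lemma on_add: "op_norm (A + B) \<le> op_norm A + op_norm (B :: real^'k^'n)"
proof -
  have "(*v) (A + B) = (\<lambda>x. A *v x + B *v x)" by (simp add: fun_eq_iff matrix_vector_mult_add_rdistrib)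
  then show ?thesis unfolding op_norm_def using onorm_triangle[of "(*v) A" "(*v) B"] by simp
qed

lemma on_scaleR: "op_norm (c *\<^sub>R A) = \<bar>c\<bar> * op_norm (A :: real^'k^'n)"
proof -
  have "(*v) (c *\<^sub>R A) = (\<lambda>x. c *\<^sub>R (A *v x))" by (simp add: fun_eq_iff mv_scaleR_left)
  then show ?thesis unfolding op_norm_def using onorm_scaleR[of "(*v) A" c] by simp
qed

lemma on_neg: "op_norm (- A) = op_norm (A :: real^'k^'n)"
proof -
  have "(*v) (- A) = (\<lambda>x. - (A *v x))" by (simp add: fun_eq_iff matrix_vector_mult_def Finite_Cartesian_Product.vec_eq_iff sum_negf)
  then show ?thesis unfolding op_norm_def using onorm_neg[of "(*v) A"] by simp
qed

lemma on_sum: "finite I \<Longrightarrow> op_norm (\<Sum>i\<in>I. f i) \<le> (\<Sum>i\<in>I. op_norm (f i :: real^'k^'n))"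
proof (induction I rule: finite_induct)
  case empty
  have "op_norm (0 :: real^'k^'n) = 0" unfolding op_norm_def by (simp add: onorm_eq_0)
  then show ?case by simp
next
  case (insert a I)
  then show ?case using on_add[of "f a" "sum f I"] by simp
qed

lemma on_pos: "(A :: real^'k^'n) \<noteq> 0 \<Longrightarrow> op_norm A > 0"
  unfolding op_norm_def by (subst onorm_pos_lt) (auto simp: matrix_eq)

lemma on_proj:
  fixes Q :: "real^'n^'n"
  assumes "Q ** Q = Q" "transpose Q = Q"
  shows "op_norm Q \<le> 1"
  unfolding op_norm_def
proof (rule onorm_le)
  fix x :: "real^'n"
  have "(Q *v x) \<bullet> (Q *v x) = x \<bullet> (Q *v (Q *v x))" using mv_inner_sym[of Q x "Q *v x"] assms by simp
  also have "\<dots> = x \<bullet> (Q *v x)" using assms by (simp add: matrix_vector_mul_assoc)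
  also have "\<dots> \<le> norm x * norm (Q *v x)" by (rule norm_cauchy_schwarz)
  finally have "norm (Q *v x) ^ 2 \<le> norm x * norm (Q *v x)" by (simp add: power2_norm_eq_inner)
  then show "norm (Q *v x) \<le> 1 * norm x"
    by (cases "norm (Q *v x) = 0") (auto simp: power2_eq_square)
qed

lemma mm_sum_left: "finite I \<Longrightarrow> (\<Sum>i\<in>I. f i) ** B = (\<Sum>i\<in>I. f i ** (B :: real^'k^'n))"
  by (induction I rule: finite_induct) (simp_all add: mm_add_rdistrib)

lemma mm_sum_right: "finite I \<Longrightarrow> B ** (\<Sum>i\<in>I. f i) = (\<Sum>i\<in>I. B ** (f i :: real^'k^'n))"
  by (induction I rule: finite_induct) (simp_all add: matrix_add_ldistrib)

lemma transpose_mm: "transpose (A ** B) = transpose B ** transpose (A :: real^'k^'n)"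
  by (rule matrix_transpose_mul)

lemma transpose_zero_cart: "transpose (0 :: real^'k^'n) = 0"
  by (simp add: transpose_def Finite_Cartesian_Product.vec_eq_iff)

lemma transpose_sum_cart: "finite I \<Longrightarrow> transpose (\<Sum>i\<in>I. f i) = (\<Sum>i\<in>I. transpose (f i :: real^'k^'n))"
  by (induction I rule: finite_induct) (simp_all add: transpose_add_cart transpose_zero_cart)


lemma alg_deriv:
  fixes Q :: "nat \<Rightarrow> real^'n^'n" and S S' Qd :: "real^'n^'n" and lam :: "nat \<Rightarrow> real"
  assumes I: "finite I" and j: "j \<in> I"
    and Qidem: "\<And>i. i \<in> I \<Longrightarrow> Q i ** Q i = Q i"
    and Qsym: "\<And>i. i \<in> I \<Longrightarrow> transpose (Q i) = Q i"
    and Qorth: "\<And>i l. i \<in> I \<Longrightarrow> l \<in> I \<Longrightarrow> i \<noteq> l \<Longrightarrow> Q i ** Q l = 0"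
    and Qsum: "(\<Sum>i\<in>I. Q i) = mat 1"
    and QS: "\<And>i. i \<in> I \<Longrightarrow> Q i ** S = lam i *\<^sub>R Q i"
    and dist: "\<And>i. i \<in> I \<Longrightarrow> i \<noteq> j \<Longrightarrow> lam i \<noteq> lam j"
    and D1: "Qd ** Q j + Q j ** Qd = Qd"
    and D2: "S' ** Q j + S ** Qd = lamd *\<^sub>R Q j + lam j *\<^sub>R Qd"
    and D3: "transpose Qd = Qd"
  shows "Qd = (\<Sum>i\<in>I-{j}. (1 / (lam j - lam i)) *\<^sub>R (Q i ** S' ** Q j))
             + transpose (\<Sum>i\<in>I-{j}. (1 / (lam j - lam i)) *\<^sub>R (Q i ** S' ** Q j))"
    and "lamd *\<^sub>R Q j = Q j ** S' ** Q j"
proof -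
  define X where "X = (\<Sum>i\<in>I-{j}. (1 / (lam j - lam i)) *\<^sub>R (Q i ** S' ** Q j))"
  have L2: "Q i ** S' ** Q j + lam i *\<^sub>R (Q i ** Qd) = lamd *\<^sub>R (Q i ** Q j) + lam j *\<^sub>R (Q i ** Qd)"
    if i: "i \<in> I" for i
  proof -
    have "Q i ** (S' ** Q j + S ** Qd) = Q i ** (lamd *\<^sub>R Q j + lam j *\<^sub>R Qd)" using D2 by simp
    then show ?thesis
      by (simp add: matrix_add_ldistrib mm_scaleR_right matrix_mul_assoc QS[OF i] mm_scaleR_left)
  qed
  have a: "Q j ** Qd ** Q j = 0"
  proof -
    have "Q j ** (Qd ** Q j + Q j ** Qd) = Q j ** Qd" using D1 by simp
    then have "Q j ** Qd ** Q j + Q j ** Qd = Q j ** Qd"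
      by (simp add: matrix_add_ldistrib matrix_mul_assoc Qidem[OF j])
    then show ?thesis by simp
  qed
  have b: "Q i ** Qd ** Q j = (1 / (lam j - lam i)) *\<^sub>R (Q i ** S' ** Q j)" if i: "i \<in> I" "i \<noteq> j" for i
  proof -
    have ne: "lam j - lam i \<noteq> 0" using dist[OF i] by simp
    from L2[OF i(1)] have "Q i ** S' ** Q j = (lam j - lam i) *\<^sub>R (Q i ** Qd)"
      using Qorth[OF i(1) j i(2)] by (simp add: algebra_simps)
    then have "Q i ** Qd = (1 / (lam j - lam i)) *\<^sub>R (Q i ** S' ** Q j)"
      using ne by simp
    then have "Q i ** Qd ** Q j = (1 / (lam j - lam i)) *\<^sub>R (Q i ** S' ** Q j ** Q j)"
      by (simp add: mm_scaleR_left)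
    also have "Q i ** S' ** Q j ** Q j = Q i ** S' ** Q j"
      by (simp add: matrix_mul_assoc[symmetric] Qidem[OF j])
    finally show ?thesis .
  qed
  have c: "Qd ** Q j = X"
  proof -
    have "Qd ** Q j = (\<Sum>i\<in>I. Q i) ** Qd ** Q j" by (simp add: Qsum)
    also have "\<dots> = (\<Sum>i\<in>I. Q i ** Qd ** Q j)" by (simp add: mm_sum_left[OF I])
    also have "\<dots> = Q j ** Qd ** Q j + (\<Sum>i\<in>I-{j}. Q i ** Qd ** Q j)"
      using I j by (simp add: sum.remove)
    also have "\<dots> = X" unfolding a X_def by (simp, rule sum.cong) (auto simp: b)
    finally show ?thesis .
  qed
  have d: "Q j ** Qd = transpose X"
    by (simp add: c[symmetric] transpose_mm D3 Qsym[OF j])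
  have "Qd = Qd ** Q j + Q j ** Qd" using D1 by simp
  then show "Qd = X + transpose X" by (simp only: c d)
  show "lamd *\<^sub>R Q j = Q j ** S' ** Q j"
    using L2[OF j] by (simp add: Qidem[OF j])
qed


lemma norm_X_bound:
  fixes Q :: "nat \<Rightarrow> real^'n^'n" and S' :: "real^'n^'n"
  assumes I: "finite I" and Qn: "\<And>i. i \<in> I \<Longrightarrow> op_norm (Q i) \<le> 1" and j: "j \<in> I"
  shows "op_norm (\<Sum>i\<in>I-{j}. (1 / (lam j - lam i)) *\<^sub>R (Q i ** S' ** Q j))
           \<le> (\<Sum>i\<in>I-{j}. op_norm S' / \<bar>lam j - lam i\<bar>)"
proof -
  have "op_norm (\<Sum>i\<in>I-{j}. (1 / (lam j - lam i)) *\<^sub>R (Q i ** S' ** Q j))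
      \<le> (\<Sum>i\<in>I-{j}. op_norm ((1 / (lam j - lam i)) *\<^sub>R (Q i ** S' ** Q j)))"
    using I by (intro on_sum) auto
  also have "\<dots> \<le> (\<Sum>i\<in>I-{j}. op_norm S' / \<bar>lam j - lam i\<bar>)"
  proof (rule sum_mono)
    fix i assume i: "i \<in> I - {j}"
    have "op_norm (Q i ** S' ** Q j) \<le> op_norm (Q i ** S') * op_norm (Q j)" by (rule on_mult)
    also have "\<dots> \<le> op_norm (Q i ** S') * 1"
      using Qn[OF j] on_nonneg[of "Q i ** S'"] by (intro mult_left_mono) auto
    also have "op_norm (Q i ** S') \<le> op_norm (Q i) * op_norm S'" by (rule on_mult)
    also have "\<dots> \<le> 1 * op_norm S'" using Qn i on_nonneg[of S'] by (intro mult_right_mono) auto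
    finally have "op_norm (Q i ** S' ** Q j) \<le> op_norm S'" by simp
    then show "op_norm ((1 / (lam j - lam i)) *\<^sub>R (Q i ** S' ** Q j)) \<le> op_norm S' / \<bar>lam j - lam i\<bar>"
      by (simp add: on_scaleR divide_right_mono)
  qed
  finally show ?thesis .
qed

lemma transpose_X:
  fixes Q :: "nat \<Rightarrow> real^'n^'n" and S' :: "real^'n^'n"
  assumes I: "finite I" and Qs: "\<And>i. i \<in> I \<Longrightarrow> transpose (Q i) = Q i" and j: "j \<in> I"
    and S's: "transpose S' = S'"
  shows "transpose (\<Sum>i\<in>I-{j}. (1 / (lam j - lam i)) *\<^sub>R (Q i ** S' ** Q j))
        = (\<Sum>i\<in>I-{j}. (1 / (lam j - lam i)) *\<^sub>R (Q j ** S' ** Q i))"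
  using I j Qs S's by (simp add: transpose_sum_cart transpose_scaleR_cart transpose_mm matrix_mul_assoc)

lemma norm_deriv_bound:
  fixes Q :: "nat \<Rightarrow> real^'n^'n" and S' Qd :: "real^'n^'n"
  assumes I: "finite I" and Qn: "\<And>i. i \<in> I \<Longrightarrow> op_norm (Q i) \<le> 1" and j: "j \<in> I"
    and Qs: "\<And>i. i \<in> I \<Longrightarrow> transpose (Q i) = Q i" and S's: "transpose S' = S'"
    and Qd: "Qd = (\<Sum>i\<in>I-{j}. (1 / (lam j - lam i)) *\<^sub>R (Q i ** S' ** Q j))
             + transpose (\<Sum>i\<in>I-{j}. (1 / (lam j - lam i)) *\<^sub>R (Q i ** S' ** Q j))"
  shows "op_norm Qd \<le> 2 * (\<Sum>i\<in>I-{j}. op_norm S' / \<bar>lam j - lam i\<bar>)"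
proof -
  have t: "op_norm (transpose (\<Sum>i\<in>I-{j}. (1 / (lam j - lam i)) *\<^sub>R (Q i ** S' ** Q j)))
      \<le> (\<Sum>i\<in>I-{j}. op_norm S' / \<bar>lam j - lam i\<bar>)"
  proof -
    have "op_norm (\<Sum>i\<in>I-{j}. (1 / (lam j - lam i)) *\<^sub>R (Q j ** S' ** Q i))
        \<le> (\<Sum>i\<in>I-{j}. op_norm ((1 / (lam j - lam i)) *\<^sub>R (Q j ** S' ** Q i)))"
      using I by (intro on_sum) auto
    also have "\<dots> \<le> (\<Sum>i\<in>I-{j}. op_norm S' / \<bar>lam j - lam i\<bar>)"
    proof (rule sum_mono)
      fix i assume i: "i \<in> I - {j}"
      have "op_norm (Q j ** S' ** Q i) \<le> op_norm (Q j ** S') * op_norm (Q i)" by (rule on_mult)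
      also have "\<dots> \<le> op_norm (Q j ** S') * 1"
        using Qn i on_nonneg[of "Q j ** S'"] by (intro mult_left_mono) auto
      also have "op_norm (Q j ** S') \<le> op_norm (Q j) * op_norm S'" by (rule on_mult)
      also have "\<dots> \<le> 1 * op_norm S'" using Qn[OF j] on_nonneg[of S'] by (intro mult_right_mono) auto
      finally have "op_norm (Q j ** S' ** Q i) \<le> op_norm S'" by simp
      then show "op_norm ((1 / (lam j - lam i)) *\<^sub>R (Q j ** S' ** Q i)) \<le> op_norm S' / \<bar>lam j - lam i\<bar>"
        by (simp add: on_scaleR divide_right_mono)
    qed
    finally show ?thesis using transpose_X[where I=I and Q=Q and j=j and S'=S' and lam=lam, OF I Qs j S's] by simp
  qed
  have nX: "op_norm (\<Sum>i\<in>I-{j}. (1 / (lam j - lam i)) *\<^sub>R (Q i ** S' ** Q j))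
           \<le> (\<Sum>i\<in>I-{j}. op_norm S' / \<bar>lam j - lam i\<bar>)"
    by (rule norm_X_bound[OF I Qn j])
  show ?thesis
    unfolding Qd using on_add[of "\<Sum>i\<in>I-{j}. (1 / (lam j - lam i)) *\<^sub>R (Q i ** S' ** Q j)"
       "transpose (\<Sum>i\<in>I-{j}. (1 / (lam j - lam i)) *\<^sub>R (Q i ** S' ** Q j))"] nX t
    by linarith
qed

lemma lamd_bound:
  fixes Q S' :: "real^'n^'n"
  assumes "lamd *\<^sub>R Q = Q ** S' ** Q" "op_norm Q \<le> 1" "Q \<noteq> 0"
  shows "\<bar>lamd\<bar> \<le> op_norm S'"
proof -
  have p: "op_norm Q > 0" using on_pos[OF assms(3)] .
  have "\<bar>lamd\<bar> * op_norm Q = op_norm (Q ** S' ** Q)" using assms(1) by (metis on_scaleR)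
  also have "\<dots> \<le> op_norm (Q ** S') * op_norm Q" by (rule on_mult)
  also have "\<dots> \<le> (op_norm Q * op_norm S') * op_norm Q"
    using on_mult[of Q S'] p by (intro mult_right_mono) auto
  also have "\<dots> \<le> (1 * op_norm S') * op_norm Q"
    using assms(2) p on_nonneg[of S'] by (intro mult_right_mono) auto
  finally show ?thesis using p by simp
qed

lemma lam_bound:
  fixes Q S :: "real^'n^'n"
  assumes "S ** Q = lam *\<^sub>R Q" "Q \<noteq> 0"
  shows "\<bar>lam\<bar> \<le> op_norm S"
proof -
  have p: "op_norm Q > 0" using on_pos[OF assms(2)] .
  have "\<bar>lam\<bar> * op_norm Q = op_norm (S ** Q)" using assms(1) by (metis on_scaleR)
  also have "\<dots> \<le> op_norm S * op_norm Q" by (rule on_mult)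
  finally show ?thesis using p by simp
qed


lemma mm_diff_rdistrib: "(A - B) ** C = A ** C - B ** (C :: real^'k^'n)"
  by (simp add: matrix_matrix_mult_def Finite_Cartesian_Product.vec_eq_iff sum_subtractf algebra_simps)

lemma mm_diff_ldistrib: "C ** (A - B) = C ** A - C ** (B :: real^'k^'n)"
  by (simp add: matrix_matrix_mult_def Finite_Cartesian_Product.vec_eq_iff sum_subtractf algebra_simps)

lemma sum_delta_mm:
  fixes Q :: "nat \<Rightarrow> real^'n^'n"
  assumes I: "finite I" and i: "i \<in> I"
    and Qidem: "Q i ** Q i = Q i"
    and Qorth: "\<And>l. l \<in> I \<Longrightarrow> l \<noteq> i \<Longrightarrow> Q l ** Q i = 0"
  shows "(\<Sum>l\<in>I. c l *\<^sub>R Q l) ** Q i = c i *\<^sub>R Q i"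
proof -
  have "(\<Sum>l\<in>I. c l *\<^sub>R Q l) ** Q i = (\<Sum>l\<in>I. c l *\<^sub>R (Q l ** Q i))"
    by (simp add: mm_sum_left[OF I] mm_scaleR_left)
  also have "\<dots> = (\<Sum>l\<in>I. if l = i then c i *\<^sub>R Q i else 0)"
    by (rule sum.cong) (auto simp: Qidem Qorth)
  also have "\<dots> = c i *\<^sub>R Q i" using I i by simp
  finally show ?thesis .
qed

lemma sum_delta_mm':
  fixes Q :: "nat \<Rightarrow> real^'n^'n"
  assumes I: "finite I" and i: "i \<in> I"
    and Qidem: "Q i ** Q i = Q i"
    and Qorth: "\<And>l. l \<in> I \<Longrightarrow> l \<noteq> i \<Longrightarrow> Q i ** Q l = 0"
  shows "Q i ** (\<Sum>l\<in>I. c l *\<^sub>R Q l) = c i *\<^sub>R Q i"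
proof -
  have "Q i ** (\<Sum>l\<in>I. c l *\<^sub>R Q l) = (\<Sum>l\<in>I. c l *\<^sub>R (Q i ** Q l))"
    by (simp add: mm_sum_right[OF I] mm_scaleR_right)
  also have "\<dots> = (\<Sum>l\<in>I. if l = i then c i *\<^sub>R Q i else 0)"
    by (rule sum.cong) (auto simp: Qidem Qorth)
  also have "\<dots> = c i *\<^sub>R Q i" using I i by simp
  finally show ?thesis .
qed

lemma sum_sq_mm:
  fixes Q :: "nat \<Rightarrow> real^'n^'n"
  assumes I: "finite I"
    and Qidem: "\<And>i. i \<in> I \<Longrightarrow> Q i ** Q i = Q i"
    and Qorth: "\<And>i l. i \<in> I \<Longrightarrow> l \<in> I \<Longrightarrow> i \<noteq> l \<Longrightarrow> Q i ** Q l = 0"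
  shows "(\<Sum>l\<in>I. c l *\<^sub>R Q l) ** (\<Sum>l\<in>I. d l *\<^sub>R Q l) = (\<Sum>l\<in>I. (c l * d l) *\<^sub>R Q l)"
proof -
  have "(\<Sum>l\<in>I. c l *\<^sub>R Q l) ** (\<Sum>l\<in>I. d l *\<^sub>R Q l) = (\<Sum>l\<in>I. c l *\<^sub>R (Q l ** (\<Sum>l\<in>I. d l *\<^sub>R Q l)))"
    by (simp add: mm_sum_left[OF I] mm_scaleR_left)
  also have "\<dots> = (\<Sum>l\<in>I. c l *\<^sub>R (d l *\<^sub>R Q l))"
  proof (rule sum.cong[OF refl])
    fix x assume x: "x \<in> I"
    have "Q x ** (\<Sum>l\<in>I. d l *\<^sub>R Q l) = d x *\<^sub>R Q x"
      by (rule sum_delta_mm'[where Q=Q, OF I x Qidem[OF x]]) (use Qorth x in auto)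
    then show "c x *\<^sub>R (Q x ** (\<Sum>l\<in>I. d l *\<^sub>R Q l)) = c x *\<^sub>R (d x *\<^sub>R Q x)" by simp
  qed
  finally show ?thesis by simp
qed

locale LS =
  fixes J :: "'d::finite \<Rightarrow> real^'n::finite^'n"
    and \<Lambda> :: "(real^'d) set"
    and M :: nat and r :: "nat \<Rightarrow> nat"
    and b :: "nat \<Rightarrow> real^'d \<Rightarrow> real"
    and P :: "nat \<Rightarrow> real^'d \<Rightarrow> real^'n^'n"
  assumes J_skew: "\<And>k. transpose (J k) = - J k"
    and Lambda_ne: "\<Lambda> \<noteq> {}"
    and Lambda_zariski: "zariski_open \<Lambda>"
    and M_pos: "M > 0"
    and r_pos: "\<And>j. j \<in> {1..M} \<Longrightarrow> r j > 0"
    and decomp: "\<And>\<mu>. \<mu> \<in> \<Lambda> \<Longrightarrow> mat_sqrt (- (Jmu J \<mu> ** Jmu J \<mu>)) = (\<Sum>j\<in>{1..M}. b j \<mu> *\<^sub>R P j \<mu>)"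
    and b_pos: "\<And>\<mu> j. \<mu> \<in> \<Lambda> \<Longrightarrow> j \<in> {1..M} \<Longrightarrow> b j \<mu> > 0"
    and b_distinct: "\<And>\<mu> i j. \<mu> \<in> \<Lambda> \<Longrightarrow> i \<in> {1..M} \<Longrightarrow> j \<in> {1..M} \<Longrightarrow> i \<noteq> j \<Longrightarrow> b i \<mu> \<noteq> b j \<mu>"
    and P_proj: "\<And>\<mu> j. \<mu> \<in> \<Lambda> \<Longrightarrow> j \<in> {1..M} \<Longrightarrow>
                   P j \<mu> ** P j \<mu> = P j \<mu> \<and> transpose (P j \<mu>) = P j \<mu>"
    and P_orth: "\<And>\<mu> i j. \<mu> \<in> \<Lambda> \<Longrightarrow> i \<in> {1..M} \<Longrightarrow> j \<in> {1..M} \<Longrightarrow> i \<noteq> j \<Longrightarrow>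
                   P i \<mu> ** P j \<mu> = 0"
    and P_rank: "\<And>\<mu> j. \<mu> \<in> \<Lambda> \<Longrightarrow> j \<in> {1..M} \<Longrightarrow> rank (P j \<mu>) = 2 * r j"
    and b_analytic: "\<And>j. j \<in> {1..M} \<Longrightarrow> real_analytic_on (b j) \<Lambda>"
    and P_analytic: "\<And>j a c. j \<in> {1..M} \<Longrightarrow> real_analytic_on (\<lambda>\<mu>. P j \<mu> $ a $ c) \<Lambda>"
    and P0_def: "\<And>\<mu>. \<mu> \<in> \<Lambda> \<Longrightarrow> P 0 \<mu> = mat 1 - (\<Sum>j\<in>{1..M}. P j \<mu>)"
    and P0_ker: "\<And>\<mu>. \<mu> \<in> \<Lambda> \<Longrightarrow>
                   P 0 \<mu> ** P 0 \<mu> = P 0 \<mu> \<and> transpose (P 0 \<mu>) = P 0 \<mu> \<and>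
                   range (\<lambda>x. P 0 \<mu> *v x) = {x. Jmu J \<mu> *v x = 0}"
begin

lemma mmneg: "(- A) ** B = - (A ** (B :: real^'k^'m))"
  by (simp add: matrix_matrix_mult_def Finite_Cartesian_Product.vec_eq_iff sum_negf)

lemma mmneg_r: "A ** (- B) = - (A ** (B :: real^'k^'m))"
  by (simp add: matrix_matrix_mult_def Finite_Cartesian_Product.vec_eq_iff sum_negf)

lemma transpose_neg_cart: "transpose (- A) = - transpose (A :: real^'k^'m)"
  by (simp add: transpose_def Finite_Cartesian_Product.vec_eq_iff)

lemma mv_neg: "(- A) *v x = - (A *v (x :: real^'k) :: real^'m)"
  by (simp add: matrix_vector_mult_def Finite_Cartesian_Product.vec_eq_iff sum_negf)

definition lamf :: "real^'d \<Rightarrow> nat \<Rightarrow> real" where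
  "lamf \<mu> j = (if j = 0 then 0 else (b j \<mu>)\<^sup>2)"

lemma Jmu_skew: "transpose (Jmu J \<mu>) = - Jmu J \<mu>"
  by (simp add: Jmu_def transpose_sum_cart transpose_scaleR_cart J_skew sum_negf[symmetric])

lemma S_psd: "psd (Sm J \<mu>)"
proof -
  have t: "transpose (Sm J \<mu>) = Sm J \<mu>"
    by (simp add: Sm_def transpose_mm Jmu_skew transpose_neg_cart mmneg mmneg_r)
  have "0 \<le> x \<bullet> (Sm J \<mu> *v x)" for x
  proof -
    have "x \<bullet> (Sm J \<mu> *v x) = - (x \<bullet> (Jmu J \<mu> *v (Jmu J \<mu> *v x)))"
      by (simp add: Sm_def mv_neg matrix_vector_mul_assoc[symmetric])
    also have "\<dots> = (Jmu J \<mu> *v x) \<bullet> (Jmu J \<mu> *v x)"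
      using mv_inner_transpose[of "Jmu J \<mu>" x "Jmu J \<mu> *v x"] by (simp add: Jmu_skew mv_neg)
    finally show ?thesis by simp
  qed
  then show ?thesis using t by (simp add: psd_def)
qed

lemma Sm_decomp:
  assumes mu: "\<mu> \<in> \<Lambda>"
  shows "Sm J \<mu> = (\<Sum>j\<in>{1..M}. (b j \<mu>)\<^sup>2 *\<^sub>R P j \<mu>)"
proof -
  have "mat_sqrt (Sm J \<mu>) ** mat_sqrt (Sm J \<mu>) = Sm J \<mu>" using mat_sqrt_eq[OF S_psd] by blast
  moreover have "mat_sqrt (Sm J \<mu>) = (\<Sum>j\<in>{1..M}. b j \<mu> *\<^sub>R P j \<mu>)"
    using decomp[OF mu] by (simp add: Sm_def)
  moreover have "(\<Sum>j\<in>{1..M}. b j \<mu> *\<^sub>R P j \<mu>) ** (\<Sum>j\<in>{1..M}. b j \<mu> *\<^sub>R P j \<mu>)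
      = (\<Sum>j\<in>{1..M}. (b j \<mu> * b j \<mu>) *\<^sub>R P j \<mu>)"
    by (rule sum_sq_mm) (use P_proj[OF mu] P_orth[OF mu] in auto)
  ultimately show ?thesis by (simp add: power2_eq_square)
qed

lemma Pidem: "\<mu> \<in> \<Lambda> \<Longrightarrow> j \<in> {0..M} \<Longrightarrow> P j \<mu> ** P j \<mu> = P j \<mu>"
  using P_proj[of \<mu> j] P0_ker[of \<mu>] by (cases "j = 0") auto

lemma Psym: "\<mu> \<in> \<Lambda> \<Longrightarrow> j \<in> {0..M} \<Longrightarrow> transpose (P j \<mu>) = P j \<mu>"
  using P_proj[of \<mu> j] P0_ker[of \<mu>] by (cases "j = 0") auto

lemma P0_Pj:
  assumes mu: "\<mu> \<in> \<Lambda>" and j: "j \<in> {1..M}"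
  shows "P 0 \<mu> ** P j \<mu> = 0" "P j \<mu> ** P 0 \<mu> = 0"
proof -
  have I: "finite {1..M}" by simp
  have s1: "(\<Sum>l\<in>{1..M}. P l \<mu>) ** P j \<mu> = P j \<mu>"
    using sum_delta_mm[OF I j, of "\<lambda>l. P l \<mu>" "\<lambda>l. 1"] P_proj[OF mu j] P_orth[OF mu] j by auto
  have s2: "P j \<mu> ** (\<Sum>l\<in>{1..M}. P l \<mu>) = P j \<mu>"
    using sum_delta_mm'[OF I j, of "\<lambda>l. P l \<mu>" "\<lambda>l. 1"] P_proj[OF mu j] P_orth[OF mu] j by auto
  show "P 0 \<mu> ** P j \<mu> = 0"
    unfolding P0_def[OF mu] using s1 by (simp add: mm_diff_rdistrib)
  show "P j \<mu> ** P 0 \<mu> = 0"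
    unfolding P0_def[OF mu] using s2 by (simp add: mm_diff_ldistrib)
qed

lemma Porth: "\<mu> \<in> \<Lambda> \<Longrightarrow> i \<in> {0..M} \<Longrightarrow> j \<in> {0..M} \<Longrightarrow> i \<noteq> j \<Longrightarrow> P i \<mu> ** P j \<mu> = 0"
  using P_orth[of \<mu> i j] P0_Pj[of \<mu> i] P0_Pj[of \<mu> j]
  by (cases "i = 0"; cases "j = 0") auto

lemma Psum: "\<mu> \<in> \<Lambda> \<Longrightarrow> (\<Sum>j\<in>{0..M}. P j \<mu>) = mat 1"
proof -
  assume mu: "\<mu> \<in> \<Lambda>"
  have "{0..M} = insert 0 {1..M}" by auto
  then show ?thesis using P0_def[OF mu] by simp
qed

lemma Jm_P0: "\<mu> \<in> \<Lambda> \<Longrightarrow> Jmu J \<mu> ** P 0 \<mu> = 0"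
proof -
  assume mu: "\<mu> \<in> \<Lambda>"
  have "(Jmu J \<mu> ** P 0 \<mu>) *v x = 0 *v x" for x
  proof -
    have "P 0 \<mu> *v x \<in> range (\<lambda>x. P 0 \<mu> *v x)" by simp
    then have "Jmu J \<mu> *v (P 0 \<mu> *v x) = 0" using P0_ker[OF mu] by blast
    then show ?thesis by (simp add: matrix_vector_mul_assoc)
  qed
  then show ?thesis by (simp add: matrix_eq)
qed

lemma SP: "\<mu> \<in> \<Lambda> \<Longrightarrow> j \<in> {0..M} \<Longrightarrow> Sm J \<mu> ** P j \<mu> = lamf \<mu> j *\<^sub>R P j \<mu>"
proof -
  assume mu: "\<mu> \<in> \<Lambda>" and j: "j \<in> {0..M}"
  show ?thesis
  proof (cases "j = 0")
    case True
    then show ?thesis using Jm_P0[OF mu]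
      by (simp add: Sm_def lamf_def mmneg matrix_mul_assoc[symmetric])
  next
    case False
    then have j1: "j \<in> {1..M}" using j by auto
    have l: "lamf \<mu> j = (b j \<mu>)\<^sup>2" using False by (simp add: lamf_def)
    show ?thesis unfolding Sm_decomp[OF mu] l
      by (rule sum_delta_mm) (use j1 P_proj[OF mu j1] P_orth[OF mu] in auto)
  qed
qed

lemma PS: "\<mu> \<in> \<Lambda> \<Longrightarrow> j \<in> {0..M} \<Longrightarrow> P j \<mu> ** Sm J \<mu> = lamf \<mu> j *\<^sub>R P j \<mu>"
proof -
  assume mu: "\<mu> \<in> \<Lambda>" and j: "j \<in> {0..M}"
  have "transpose (Sm J \<mu> ** P j \<mu>) = transpose (lamf \<mu> j *\<^sub>R P j \<mu>)" using SP[OF mu j] by simp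
  moreover have "transpose (Sm J \<mu>) = Sm J \<mu>" using S_psd by (simp add: psd_def)
  ultimately show ?thesis by (simp add: transpose_mm transpose_scaleR_cart Psym[OF mu j])
qed

lemma lam_distinct:
  "\<mu> \<in> \<Lambda> \<Longrightarrow> i \<in> {0..M} \<Longrightarrow> j \<in> {0..M} \<Longrightarrow> i \<noteq> j \<Longrightarrow> lamf \<mu> i \<noteq> lamf \<mu> j"
proof -
  assume mu: "\<mu> \<in> \<Lambda>" and i: "i \<in> {0..M}" and j: "j \<in> {0..M}" and ij: "i \<noteq> j"
  show ?thesis
  proof (cases "i = 0 \<or> j = 0")
    case True
    then show ?thesis using b_pos[OF mu, of i] b_pos[OF mu, of j] i j ij by (auto simp: lamf_def)
  next
    case False
    then have "i \<in> {1..M}" "j \<in> {1..M}" using i j by auto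
    then have "b i \<mu> \<noteq> b j \<mu>" "b i \<mu> > 0" "b j \<mu> > 0" using b_distinct[OF mu _ _ ij] b_pos[OF mu] by auto
    then have "(b i \<mu>)\<^sup>2 \<noteq> (b j \<mu>)\<^sup>2" by (simp add: power2_eq_iff)
    then show ?thesis using False by (simp add: lamf_def)
  qed
qed

lemma lam_pos: "\<mu> \<in> \<Lambda> \<Longrightarrow> j \<in> {1..M} \<Longrightarrow> lamf \<mu> j > 0"
  using b_pos[of \<mu> j] by (auto simp: lamf_def)

lemma P_nonzero: "\<mu> \<in> \<Lambda> \<Longrightarrow> j \<in> {1..M} \<Longrightarrow> P j \<mu> \<noteq> 0"
  using P_rank[of \<mu> j] r_pos[of j] by (auto simp: rank_0)

end


lemma Gm_gap_bound:
  fixes lam m :: "nat \<Rightarrow> real"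
  assumes M: "M > 0" and L: "L > 0" and lamL: "\<And>j. j \<in> {1..M} \<Longrightarrow> \<bar>lam j\<bar> \<le> L"
    and m: "\<And>j. j \<in> {1..M} \<Longrightarrow> 0 \<le> m j \<and> m j \<le> C"
    and lam0: "lam 0 = 0" and i: "i \<in> {0..M}" and j: "j \<in> {0..M}" and ij: "i \<noteq> j"
  shows "\<bar>Determinant.det (Gm M m lam)\<bar>
     \<le> C ^ M * fact M ^ 2 * real M * \<bar>lam i - lam j\<bar> / L * (\<Prod>k<M. L ^ Suc k)\<^sup>2"
proof -
  let ?PL = "\<Prod>k<M. L ^ Suc k"
  let ?W = "\<bar>Determinant.det (Wm M lam)\<bar>"
  have PL0: "?PL \<ge> 0" using L by (simp add: prod_nonneg)
  have C0: "C \<ge> 0" using m[of 1] M by force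
  have gap: "?W \<le> fact M * (real M * \<bar>lam i - lam j\<bar> / L) * ?PL"
  proof (cases "i = 0 \<or> j = 0")
    case True
    then obtain l where l: "l \<in> {1..M}" "\<bar>lam i - lam j\<bar> = \<bar>lam l\<bar>"
      using i j ij lam0 by (metis abs_minus_commute atLeastAtMost_iff diff_zero le_numeral_extra(4) less_one linorder_not_le)
    have "?W \<le> fact M * (\<bar>lam l\<bar> / L) * ?PL" by (rule det_Wm_bound_one[OF M L lamL l(1)])
    also have "\<dots> \<le> fact M * (real M * \<bar>lam l\<bar> / L) * ?PL"
      using M L PL0 by (intro mult_right_mono mult_left_mono divide_right_mono) (auto simp: mult_le_cancel_right1)
    finally show ?thesis using l by simp
  next
    case False
    then have i1: "i \<in> {1..M}" and j1: "j \<in> {1..M}" using i j by auto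
    show ?thesis by (rule det_Wm_bound_two[OF M L lamL i1 j1 ij])
  qed
  have all: "?W \<le> fact M * ?PL" by (rule det_Wm_bound_all[OF M L lamL])
  have e: "\<bar>Determinant.det (Gm M m lam)\<bar> = \<bar>\<Prod>j\<in>{1..M}. m j\<bar> * (?W * ?W)"
    by (simp add: det_Gm abs_mult power2_eq_square)
  have p: "\<bar>\<Prod>j\<in>{1..M}. m j\<bar> \<le> C ^ M"
  proof -
    have "(\<Prod>j\<in>{1..M}. m j) \<ge> 0" using m by (intro prod_nonneg) blast
    then have "\<bar>\<Prod>j\<in>{1..M}. m j\<bar> = (\<Prod>j\<in>{1..M}. m j)" by simp
    also have "\<dots> \<le> (\<Prod>j\<in>{1..M}. C)" using m by (intro prod_mono) auto
    finally show ?thesis by simp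
  qed
  have w: "?W * ?W \<le> (fact M * (real M * \<bar>lam i - lam j\<bar> / L) * ?PL) * (fact M * ?PL)"
    by (rule mult_mono[OF gap all]) (use M L PL0 in auto)
  have "\<bar>Determinant.det (Gm M m lam)\<bar> \<le> C ^ M * ((fact M * (real M * \<bar>lam i - lam j\<bar> / L) * ?PL) * (fact M * ?PL))"
    unfolding e by (rule mult_mono[OF p w]) (use C0 in auto)
  then show ?thesis by (simp add: power2_eq_square mult_ac)
qed

lemma sum_Suc_2: "2 * (\<Sum>k<M. Suc k) = M * (M + 1)"
  by (induction M) auto

lemma PL_sq: "(\<Prod>k<M. L ^ Suc k)\<^sup>2 = (L::real) ^ (M * (M + 1))"
proof -
  have "(\<Prod>k<M. L ^ Suc k) = L ^ (\<Sum>k<M. Suc k)" by (simp add: power_sum)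
  then have "(\<Prod>k<M. L ^ Suc k)\<^sup>2 = L ^ (2 * (\<Sum>k<M. Suc k))"
    by (simp add: power_mult[symmetric] mult.commute)
  then show ?thesis by (simp only: sum_Suc_2)
qed

lemma trace_sum_cart: "finite I \<Longrightarrow> trace (\<Sum>i\<in>I. f i) = (\<Sum>i\<in>I. trace (f i :: real^'n^'n))"
  by (induction I rule: finite_induct) (simp_all add: trace_def sum.distrib)

context LS begin

lemma mpw_decomp:
  assumes mu: "\<mu> \<in> \<Lambda>"
  shows "mpw (Sm J \<mu>) (Suc q) = (\<Sum>j\<in>{1..M}. (lamf \<mu> j) ^ Suc q *\<^sub>R P j \<mu>)"
proof (induction q)
  case 0
  have "(\<Sum>j\<in>{1..M}. (lamf \<mu> j) ^ Suc 0 *\<^sub>R P j \<mu>) = (\<Sum>j\<in>{1..M}. (b j \<mu>)\<^sup>2 *\<^sub>R P j \<mu>)"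
    by (rule sum.cong) (auto simp: lamf_def)
  then show ?case using Sm_decomp[OF mu] by simp
next
  case (Suc q)
  have "mpw (Sm J \<mu>) (Suc (Suc q)) = Sm J \<mu> ** (\<Sum>j\<in>{1..M}. (lamf \<mu> j) ^ Suc q *\<^sub>R P j \<mu>)"
    using Suc by simp
  also have "\<dots> = (\<Sum>j\<in>{1..M}. (lamf \<mu> j) ^ Suc q *\<^sub>R (Sm J \<mu> ** P j \<mu>))"
    by (simp add: mm_sum_right mm_scaleR_right)
  also have "\<dots> = (\<Sum>j\<in>{1..M}. (lamf \<mu> j) ^ Suc (Suc q) *\<^sub>R P j \<mu>)"
    by (rule sum.cong) (auto simp: SP[OF mu] mult.commute)
  finally show ?case .
qed

lemma trace_mpw:
  assumes mu: "\<mu> \<in> \<Lambda>"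
  shows "trace (mpw (Sm J \<mu>) (Suc q)) = (\<Sum>j\<in>{1..M}. trace (P j \<mu>) * (lamf \<mu> j) ^ Suc q)"
  unfolding mpw_decomp[OF mu] by (simp add: trace_sum_cart trace_scale mult.commute)

lemma H0_Gm:
  assumes mu: "\<mu> \<in> \<Lambda>"
  shows "H0 J M \<mu> = Determinant.det (Gm M (\<lambda>j. trace (P j \<mu>)) (lamf \<mu>))"
proof -
  have "(\<lambda>(k, l). trace (mpw (Sm J \<mu>) (k + l + 2))) = (\<lambda>(k, l). \<Sum>j\<in>{1..M}. trace (P j \<mu>) * lamf \<mu> j ^ (k + l + 2))"
  proof (intro ext, clarify)
    fix k l :: nat
    have e: "k + l + 2 = Suc (k + l + 1)" by simp
    show "trace (mpw (Sm J \<mu>) (k + l + 2)) = (\<Sum>j\<in>{1..M}. trace (P j \<mu>) * lamf \<mu> j ^ (k + l + 2))"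
      unfolding e by (rule trace_mpw[OF mu])
  qed
  then show ?thesis unfolding H0_def Gm_def by simp
qed

lemma diag_entry:
  fixes Q :: "real^'n^'n"
  assumes "Q ** Q = Q" "transpose Q = Q"
  shows "Q $ i $ i = (Q *v axis i 1) \<bullet> (Q *v axis i 1)"
proof -
  have "(Q *v axis i 1) \<bullet> (Q *v axis i 1) = axis i 1 \<bullet> (Q *v (Q *v axis i 1))"
    using mv_inner_sym[of Q "axis i 1" "Q *v axis i 1"] assms by simp
  also have "\<dots> = axis i 1 \<bullet> (Q *v axis i 1)" using assms by (simp add: matrix_vector_mul_assoc)
  also have "\<dots> = Q $ i $ i" by (simp add: inner_axis' matrix_vector_mult_basis column_def)
  finally show ?thesis by simp
qed

lemma trace_proj_bounds:
  fixes Q :: "real^'n^'n"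
  assumes "Q ** Q = Q" "transpose Q = Q" "Q \<noteq> 0"
  shows "0 < trace Q" "trace Q \<le> real CARD('n)"
proof -
  have d: "Q $ i $ i = (norm (Q *v axis i 1))\<^sup>2" for i
    using diag_entry[OF assms(1,2)] by (simp add: power2_norm_eq_inner)
  have le1: "norm (Q *v axis i 1) \<le> 1" for i
    using on_mv[of Q "axis i 1"] on_proj[OF assms(1,2)] on_nonneg[of Q] by simp
  have "trace Q = (\<Sum>i\<in>UNIV. (norm (Q *v axis i 1))\<^sup>2)" by (simp add: trace_def d)
  also have "\<dots> \<le> (\<Sum>i\<in>(UNIV::'n set). 1)"
    using le1 by (intro sum_mono) (simp add: power_le_one)
  finally show "trace Q \<le> real CARD('n)" by simp
  obtain i where "Q *v axis i 1 \<noteq> 0"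
  proof -
    have "\<exists>i. column i Q \<noteq> 0"
    proof (rule ccontr)
      assume "\<not> ?thesis"
      then have "Q = 0" by (simp add: column_def Finite_Cartesian_Product.vec_eq_iff)
      then show False using assms(3) by simp
    qed
    then show ?thesis using that by (auto simp: matrix_vector_mult_basis)
  qed
  then have "0 < (norm (Q *v axis i 1))\<^sup>2" by simp
  also have "\<dots> \<le> (\<Sum>i\<in>UNIV. (norm (Q *v axis i 1))\<^sup>2)" by (rule member_le_sum) auto
  finally show "0 < trace Q" by (simp add: trace_def d)
qed

lemma H0_nonzero:
  assumes mu: "\<mu> \<in> \<Lambda>"
  shows "H0 J M \<mu> \<noteq> 0"
proof -
  have m: "trace (P j \<mu>) > 0" if "j \<in> {1..M}" for j
    using trace_proj_bounds(1) P_proj[OF mu that] P_nonzero[OF mu that] by blast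
  have "Determinant.det (Wm M (lamf \<mu>)) \<noteq> 0"
  proof (rule det_Wm_nonzero)
    show "lamf \<mu> j \<noteq> 0" if "j \<in> {1..M}" for j using lam_pos[OF mu that] by simp
    show "inj_on (lamf \<mu>) {1..M}"
      by (rule inj_onI) (use lam_distinct[OF mu] in force)
  qed
  moreover have "(\<Prod>j\<in>{1..M}. trace (P j \<mu>)) \<noteq> 0" using m by (simp add: prod_zero_iff) force
  ultimately show ?thesis by (simp add: H0_Gm[OF mu] det_Gm)
qed

end


lemma pf_cont: "poly_fun p \<Longrightarrow> continuous_on UNIV p"
  by (induction rule: poly_fun.induct) (auto intro!: continuous_intros)

lemma zariski_open_open: "zariski_open U \<Longrightarrow> open U"
proof -
  assume "zariski_open U"
  then obtain S where S: "\<forall>p\<in>S. poly_fun p" "U = {x. \<exists>p\<in>S. p x \<noteq> 0}"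
    unfolding zariski_open_def by blast
  have "U = (\<Union>p\<in>S. {x. p x \<noteq> 0})" using S(2) by auto
  moreover have "open {x. p x \<noteq> 0}" if "p \<in> S" for p
    using open_Collect_neq[OF pf_cont[of p] continuous_on_const[of UNIV 0]] S(1) that by simp
  ultimately show ?thesis by auto
qed

lemma deriv_unique_on:
  fixes f g :: "real \<Rightarrow> 'a::real_normed_vector"
  assumes "(f has_vector_derivative D1) (at 0)" "(g has_vector_derivative D2) (at 0)"
    and "open T" "0 \<in> T" "\<And>t. t \<in> T \<Longrightarrow> f t = g t"
  shows "D1 = D2"
proof -
  have "(g has_vector_derivative D1) (at 0)"
    by (rule has_vector_derivative_transform_within_open[OF assms(1) assms(3,4)]) (use assms(5) in auto)
  then show ?thesis using assms(2) vector_derivative_unique_at by blast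
qed

lemma Jmu_line: "Jmu J (\<mu> + t *\<^sub>R axis k 1) = Jmu J \<mu> + t *\<^sub>R J k"
proof -
  have "Jmu J (\<mu> + t *\<^sub>R axis k 1) = Jmu J \<mu> + (\<Sum>l\<in>UNIV. (t * axis k 1 $ l) *\<^sub>R J l)"
    by (simp add: Jmu_def scaleR_add_left sum.distrib)
  also have "(\<Sum>l\<in>UNIV. (t * axis k 1 $ l) *\<^sub>R J l) = (\<Sum>l\<in>UNIV. if l = k then t *\<^sub>R J k else 0)"
    by (rule sum.cong) (auto simp: axis_def)
  also have "\<dots> = t *\<^sub>R J k" by simp
  finally show ?thesis .
qed

context LS begin

lemma open_Lambda: "open \<Lambda>" by (rule zariski_open_open[OF Lambda_zariski])

lemma mu_nonzero: "\<mu> \<in> \<Lambda> \<Longrightarrow> \<mu> \<noteq> 0"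
proof
  assume mu: "\<mu> \<in> \<Lambda>" and z: "\<mu> = 0"
  have one: "1 \<in> {1..M}" using M_pos by simp
  have "Sm J \<mu> = 0" using z by (simp add: Sm_def Jmu_def)
  then have "lamf \<mu> 1 *\<^sub>R P 1 \<mu> = 0" using SP[OF mu, of 1] one by simp
  then show False using lam_pos[OF mu one] P_nonzero[OF mu one] by simp
qed

definition Sd :: "real^'d \<Rightarrow> 'd \<Rightarrow> real^'n^'n" where
  "Sd \<mu> k = - (Jmu J \<mu> ** J k + J k ** Jmu J \<mu>)"

lemma transpose_diff_cart: "transpose (A - B) = transpose A - transpose (B :: real^'k^'m)"
  by (simp add: transpose_def Finite_Cartesian_Product.vec_eq_iff)

lemma Sd_sym: "transpose (Sd \<mu> k) = Sd \<mu> k"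
  by (simp add: Sd_def transpose_neg_cart transpose_diff_cart transpose_add_cart transpose_mm Jmu_skew J_skew mmneg mmneg_r)

lemma deriv_bounds:
  assumes mu: "\<mu> \<in> \<Lambda>"
  shows "\<forall>j\<in>{1..M}. \<bar>partial_deriv k (b j) \<mu> / b j \<mu>\<bar> \<le> op_norm (Sd \<mu> k) / (2 * lamf \<mu> j)"
    and "\<forall>j\<in>{0..M}. op_norm (partial_deriv k (P j) \<mu>)
            \<le> 2 * (\<Sum>i\<in>{0..M}-{j}. op_norm (Sd \<mu> k) / \<bar>lamf \<mu> j - lamf \<mu> i\<bar>)"
proof -
  define \<gamma> where "\<gamma> t = \<mu> + t *\<^sub>R axis k 1" for t :: real
  have g0: "\<gamma> 0 = \<mu>" by (simp add: \<gamma>_def)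
  obtain \<delta> where \<delta>: "\<delta> > 0" "ball \<mu> \<delta> \<subseteq> \<Lambda>" using open_Lambda mu open_contains_ball by blast
  define T where "T = ball (0::real) \<delta>"
  have T: "open T" "0 \<in> T" using \<delta> by (auto simp: T_def)
  have gT: "\<gamma> t \<in> \<Lambda>" if "t \<in> T" for t
    using that \<delta> by (auto simp: T_def \<gamma>_def dist_norm)
  define Pd where "Pd j = partial_deriv k (P j) \<mu>" for j
  define bd where "bd j = partial_deriv k (b j) \<mu>" for j
  define lamd where "lamd j = (if j = 0 then 0 else 2 * b j \<mu> * bd j)" for j
  have hP1: "((\<lambda>t. P j (\<gamma> t)) has_vector_derivative Pd j) (at 0)" if j: "j \<in> {1..M}" for j
  proof -
    let ?D = "\<chi> a c. partial_deriv k (\<lambda>\<mu>. P j \<mu> $ a $ c) \<mu>"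
    have "((\<lambda>t. P j (\<gamma> t)) has_vector_derivative ?D) (at 0)"
      unfolding \<gamma>_def by (rule hvd_mat) (simp add: analytic_partial[OF P_analytic[OF j] mu])
    moreover then have "Pd j = ?D" unfolding Pd_def partial_deriv_def \<gamma>_def by (rule vector_derivative_at)
    ultimately show ?thesis by simp
  qed
  have hP: "((\<lambda>t. P j (\<gamma> t)) has_vector_derivative Pd j) (at 0)" if j: "j \<in> {0..M}" for j
  proof (cases "j = 0")
    case False then show ?thesis using hP1 j by auto
  next
    case True
    have "((\<lambda>t. mat 1 - (\<Sum>i\<in>{1..M}. P i (\<gamma> t))) has_vector_derivative (0 - (\<Sum>i\<in>{1..M}. Pd i))) (at 0)"
      by (intro has_vector_derivative_diff has_vector_derivative_const has_vector_derivative_sum hP1)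
    then have h0: "((\<lambda>t. P 0 (\<gamma> t)) has_vector_derivative (0 - (\<Sum>i\<in>{1..M}. Pd i))) (at 0)"
      by (rule has_vector_derivative_transform_within_open[OF _ T]) (simp add: P0_def[OF gT])
    then have "Pd 0 = 0 - (\<Sum>i\<in>{1..M}. Pd i)"
      unfolding Pd_def partial_deriv_def \<gamma>_def by (rule vector_derivative_at)
    then show ?thesis using h0 True by simp
  qed
  have hb: "((\<lambda>t. b j (\<gamma> t)) has_field_derivative bd j) (at 0)" if j: "j \<in> {1..M}" for j
    unfolding bd_def \<gamma>_def has_real_derivative_iff_has_vector_derivative
    by (rule analytic_partial[OF b_analytic[OF j] mu])
  have hlam: "((\<lambda>t. lamf (\<gamma> t) j) has_field_derivative lamd j) (at 0)" if j: "j \<in> {0..M}" for j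
  proof (cases "j = 0")
    case True then show ?thesis by (simp add: lamf_def lamd_def)
  next
    case False
    then have j1: "j \<in> {1..M}" using j by auto
    have "((\<lambda>t. (b j (\<gamma> t))\<^sup>2) has_field_derivative of_nat 2 * (bd j * b j (\<gamma> 0) ^ (2 - Suc 0))) (at 0)"
      by (rule DERIV_power[OF hb[OF j1]])
    then show ?thesis using False by (simp add: lamf_def lamd_def g0 mult_ac)
  qed
  have hJ: "((\<lambda>t. Jmu J (\<gamma> t)) has_vector_derivative J k) (at 0)"
    unfolding \<gamma>_def Jmu_line
    by (rule has_vector_derivative_eq_rhs, (rule derivative_intros)+) simp_all
  have hS: "((\<lambda>t. Sm J (\<gamma> t)) has_vector_derivative Sd \<mu> k) (at 0)"
  proof -
    have "((\<lambda>t. - (Jmu J (\<gamma> t) ** Jmu J (\<gamma> t))) has_vector_derivative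
        - (Jmu J (\<gamma> 0) ** J k + J k ** Jmu J (\<gamma> 0))) (at 0)"
      by (intro has_vector_derivative_minus hvd_mmult hJ)
    then show ?thesis by (simp add: Sm_def[abs_def] Sd_def g0)
  qed
  have key: "Pd j = (\<Sum>i\<in>{0..M}-{j}. (1 / (lamf \<mu> j - lamf \<mu> i)) *\<^sub>R (P i \<mu> ** Sd \<mu> k ** P j \<mu>))
             + transpose (\<Sum>i\<in>{0..M}-{j}. (1 / (lamf \<mu> j - lamf \<mu> i)) *\<^sub>R (P i \<mu> ** Sd \<mu> k ** P j \<mu>))
      \<and> lamd j *\<^sub>R P j \<mu> = P j \<mu> ** Sd \<mu> k ** P j \<mu>" if j: "j \<in> {0..M}" for j
  proof -
    have D1: "Pd j ** P j \<mu> + P j \<mu> ** Pd j = Pd j"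
    proof -
      have "((\<lambda>t. P j (\<gamma> t) ** P j (\<gamma> t)) has_vector_derivative P j (\<gamma> 0) ** Pd j + Pd j ** P j (\<gamma> 0)) (at 0)"
        by (rule hvd_mmult[OF hP[OF j] hP[OF j]])
      from deriv_unique_on[OF this hP[OF j] T] Pidem[OF gT j] show ?thesis by (simp add: g0 add.commute)
    qed
    have D2: "Sd \<mu> k ** P j \<mu> + Sm J \<mu> ** Pd j = lamd j *\<^sub>R P j \<mu> + lamf \<mu> j *\<^sub>R Pd j"
    proof -
      have l: "((\<lambda>t. Sm J (\<gamma> t) ** P j (\<gamma> t)) has_vector_derivative Sm J (\<gamma> 0) ** Pd j + Sd \<mu> k ** P j (\<gamma> 0)) (at 0)"
        by (rule hvd_mmult[OF hS hP[OF j]])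
      have r: "((\<lambda>t. lamf (\<gamma> t) j *\<^sub>R P j (\<gamma> t)) has_vector_derivative lamf (\<gamma> 0) j *\<^sub>R Pd j + lamd j *\<^sub>R P j (\<gamma> 0)) (at 0)"
        by (rule has_vector_derivative_scaleR[OF hlam[OF j] hP[OF j]])
      from deriv_unique_on[OF l r T] SP[OF gT j] show ?thesis by (simp add: g0 add.commute)
    qed
    have D3: "transpose (Pd j) = Pd j"
    proof -
      have "((\<lambda>t. transpose (P j (\<gamma> t))) has_vector_derivative transpose (Pd j)) (at 0)"
        by (rule hvd_transpose[OF hP[OF j]])
      from deriv_unique_on[OF this hP[OF j] T] Psym[OF gT j] show ?thesis by simp
    qed
    have dist: "\<And>i. i \<in> {0..M} \<Longrightarrow> i \<noteq> j \<Longrightarrow> lamf \<mu> i \<noteq> lamf \<mu> j"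
      using lam_distinct[OF mu _ j] by blast
    show ?thesis
      using alg_deriv[where Q="\<lambda>i. P i \<mu>" and I="{0..M}" and j=j and S="Sm J \<mu>" and lam="lamf \<mu>"
          and Qd="Pd j" and S'="Sd \<mu> k" and lamd="lamd j", OF _ j Pidem[OF mu] Psym[OF mu] Porth[OF mu]
          Psum[OF mu] PS[OF mu] dist D1 D2 D3]
      by auto
  qed
  show "\<forall>j\<in>{1..M}. \<bar>partial_deriv k (b j) \<mu> / b j \<mu>\<bar> \<le> op_norm (Sd \<mu> k) / (2 * lamf \<mu> j)"
  proof
    fix j assume j1: "j \<in> {1..M}"
    then have j: "j \<in> {0..M}" by auto
    have "\<bar>lamd j\<bar> \<le> op_norm (Sd \<mu> k)"
      by (rule lamd_bound[OF conjunct2[OF key[OF j]] on_proj P_nonzero[OF mu j1]])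
         (use P_proj[OF mu j1] in auto)
    moreover have "lamd j = 2 * b j \<mu> * bd j" using j1 by (simp add: lamd_def)
    moreover have "lamf \<mu> j = b j \<mu> * b j \<mu>" using j1 by (simp add: lamf_def power2_eq_square)
    moreover have "b j \<mu> > 0" using b_pos[OF mu j1] .
    ultimately show "\<bar>partial_deriv k (b j) \<mu> / b j \<mu>\<bar> \<le> op_norm (Sd \<mu> k) / (2 * lamf \<mu> j)"
      unfolding bd_def[symmetric] by (simp add: abs_mult field_simps)
  qed
  show "\<forall>j\<in>{0..M}. op_norm (partial_deriv k (P j) \<mu>)
            \<le> 2 * (\<Sum>i\<in>{0..M}-{j}. op_norm (Sd \<mu> k) / \<bar>lamf \<mu> j - lamf \<mu> i\<bar>)"
  proof
    fix j assume j: "j \<in> {0..M}"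
    have Pn: "op_norm (P i \<mu>) \<le> 1" if "i \<in> {0..M}" for i
      by (rule on_proj[OF Pidem[OF mu that] Psym[OF mu that]])
    show "op_norm (partial_deriv k (P j) \<mu>) \<le> 2 * (\<Sum>i\<in>{0..M}-{j}. op_norm (Sd \<mu> k) / \<bar>lamf \<mu> j - lamf \<mu> i\<bar>)"
      unfolding Pd_def[symmetric]
      by (rule norm_deriv_bound[where Q="\<lambda>i. P i \<mu>", OF _ Pn j Psym[OF mu] Sd_sym conjunct1[OF key[OF j]]]) simp
  qed
qed

end


context LS begin

definition C1 :: real where "C1 = (\<Sum>l\<in>UNIV. op_norm (J l)) + 1"

lemma C1_pos: "C1 > 0"
proof -
  have "(\<Sum>l\<in>UNIV. op_norm (J l)) \<ge> 0" by (intro sum_nonneg) (simp add: on_nonneg)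
  then show ?thesis by (simp add: C1_def)
qed

lemma Jk_bound: "op_norm (J k) \<le> C1"
proof -
  have "op_norm (J k) \<le> (\<Sum>l\<in>UNIV. op_norm (J l))"
    by (rule member_le_sum) (auto simp: on_nonneg)
  then show ?thesis by (simp add: C1_def)
qed

lemma Jmu_bound: "op_norm (Jmu J \<mu>) \<le> C1 * norm \<mu>"
proof -
  have "op_norm (Jmu J \<mu>) \<le> (\<Sum>l\<in>UNIV. op_norm (\<mu> $ l *\<^sub>R J l))"
    using on_sum[of UNIV "\<lambda>l. \<mu> $ l *\<^sub>R J l"] unfolding Jmu_def by simp
  also have "\<dots> \<le> (\<Sum>l\<in>UNIV. norm \<mu> * op_norm (J l))"
    by (intro sum_mono) (simp add: on_scaleR component_le_norm_cart mult_right_mono on_nonneg)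
  also have "\<dots> = norm \<mu> * (\<Sum>l\<in>UNIV. op_norm (J l))" by (simp add: sum_distrib_left)
  also have "\<dots> \<le> norm \<mu> * C1" by (intro mult_left_mono) (auto simp: C1_def)
  finally show ?thesis by (simp add: mult.commute)
qed

lemma Sd_bound: "op_norm (Sd \<mu> k) \<le> 2 * C1\<^sup>2 * norm \<mu>"
proof -
  have "op_norm (Sd \<mu> k) \<le> op_norm (Jmu J \<mu> ** J k) + op_norm (J k ** Jmu J \<mu>)"
    unfolding Sd_def on_neg by (rule on_add)
  also have "\<dots> \<le> (C1 * norm \<mu>) * C1 + C1 * (C1 * norm \<mu>)"
  proof (rule add_mono)
    show "op_norm (Jmu J \<mu> ** J k) \<le> (C1 * norm \<mu>) * C1"
      by (rule order.trans[OF on_mult mult_mono[OF Jmu_bound Jk_bound]])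
         (use C1_pos on_nonneg[of "J k"] in auto)
    show "op_norm (J k ** Jmu J \<mu>) \<le> C1 * (C1 * norm \<mu>)"
      by (rule order.trans[OF on_mult mult_mono[OF Jk_bound Jmu_bound]])
         (use C1_pos on_nonneg[of "Jmu J \<mu>"] in auto)
  qed
  finally show ?thesis by (simp add: power2_eq_square algebra_simps)
qed

lemma Sm_bound: "op_norm (Sm J \<mu>) \<le> C1\<^sup>2 * (norm \<mu>)\<^sup>2"
proof -
  have "op_norm (Sm J \<mu>) \<le> op_norm (Jmu J \<mu>) * op_norm (Jmu J \<mu>)"
    unfolding Sm_def on_neg by (rule on_mult)
  also have "\<dots> \<le> (C1 * norm \<mu>) * (C1 * norm \<mu>)"
    using Jmu_bound[of \<mu>] on_nonneg[of "Jmu J \<mu>"] by (intro mult_mono) auto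
  finally show ?thesis by (simp add: power2_eq_square algebra_simps)
qed

lemma lam_le: "\<mu> \<in> \<Lambda> \<Longrightarrow> j \<in> {1..M} \<Longrightarrow> \<bar>lamf \<mu> j\<bar> \<le> C1\<^sup>2 * (norm \<mu>)\<^sup>2"
  using lam_bound[OF SP P_nonzero] Sm_bound[of \<mu>] by force

definition Kc :: real where "Kc = real CARD('n) ^ M * fact M ^ 2 * real M"

lemma H0_bound:
  assumes mu: "\<mu> \<in> \<Lambda>" and i: "i \<in> {0..M}" and j: "j \<in> {0..M}" and ij: "i \<noteq> j"
  shows "\<bar>H0 J M \<mu>\<bar> \<le> Kc * \<bar>lamf \<mu> i - lamf \<mu> j\<bar> / (C1\<^sup>2 * (norm \<mu>)\<^sup>2) * (C1\<^sup>2 * (norm \<mu>)\<^sup>2) ^ (M * (M + 1))"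
proof -
  let ?L = "C1\<^sup>2 * (norm \<mu>)\<^sup>2"
  have L: "?L > 0" using C1_pos mu_nonzero[OF mu] by simp
  have "\<bar>Determinant.det (Gm M (\<lambda>j. trace (P j \<mu>)) (lamf \<mu>))\<bar>
     \<le> real CARD('n) ^ M * fact M ^ 2 * real M * \<bar>lamf \<mu> i - lamf \<mu> j\<bar> / ?L * (\<Prod>k<M. ?L ^ Suc k)\<^sup>2"
  proof (rule Gm_gap_bound[OF M_pos L _ _ _ i j ij])
    show "\<bar>lamf \<mu> j\<bar> \<le> ?L" if "j \<in> {1..M}" for j by (rule lam_le[OF mu that])
    show "0 \<le> trace (P j \<mu>) \<and> trace (P j \<mu>) \<le> real CARD('n)" if "j \<in> {1..M}" for j
      using trace_proj_bounds[of "P j \<mu>"] P_proj[OF mu that] P_nonzero[OF mu that] by force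
    show "lamf \<mu> 0 = 0" by (simp add: lamf_def)
  qed
  then have "\<bar>Determinant.det (Gm M (\<lambda>j. trace (P j \<mu>)) (lamf \<mu>))\<bar>
     \<le> real CARD('n) ^ M * fact M ^ 2 * real M * \<bar>lamf \<mu> i - lamf \<mu> j\<bar> / ?L * ?L ^ (M * (M + 1))"
    unfolding PL_sq .
  then show ?thesis by (simp add: H0_Gm[OF mu] Kc_def)
qed

end


context LS begin

lemma Kc_pos: "Kc > 0" using M_pos by (simp add: Kc_def)

lemma gap_inv_bound:
  assumes mu: "\<mu> \<in> \<Lambda>" and i: "i \<in> {0..M}" and j: "j \<in> {0..M}" and ij: "i \<noteq> j"
  shows "1 / \<bar>lamf \<mu> j - lamf \<mu> i\<bar>
     \<le> Kc * (C1\<^sup>2 * (norm \<mu>)\<^sup>2) ^ (M * (M + 1)) / ((C1\<^sup>2 * (norm \<mu>)\<^sup>2) * \<bar>H0 J M \<mu>\<bar>)"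
proof -
  let ?L = "C1\<^sup>2 * (norm \<mu>)\<^sup>2"
  let ?g = "\<bar>lamf \<mu> j - lamf \<mu> i\<bar>"
  have L: "?L > 0" using C1_pos mu_nonzero[OF mu] by simp
  have g: "?g > 0" using lam_distinct[OF mu i j ij] by simp
  have H: "\<bar>H0 J M \<mu>\<bar> > 0" using H0_nonzero[OF mu] by simp
  have "\<bar>H0 J M \<mu>\<bar> \<le> Kc * ?g / ?L * ?L ^ (M * (M + 1))"
    using H0_bound[OF mu j i ij[symmetric]] .
  then have "\<bar>H0 J M \<mu>\<bar> * ?L \<le> Kc * ?g * ?L ^ (M * (M + 1))"
    using L by (simp add: field_simps)
  then show ?thesis using L g H by (simp add: field_simps)
qed

theorem main:
  "\<exists>H :: real^'d \<Rightarrow> real. \<exists>h :: nat. homog_poly h H \<and> (\<exists>\<mu>. H \<mu> \<noteq> 0) \<and>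
           (\<forall>\<mu>\<in>\<Lambda>. H \<mu> \<noteq> 0 \<and>
              (\<forall>j\<in>{1..M}. \<forall>k.
                 \<bar>partial_deriv k (b j) \<mu> / b j \<mu>\<bar> \<le> norm \<mu> powr (real h - 1) / \<bar>H \<mu>\<bar>) \<and>
              (\<forall>j\<in>{0..M}. \<forall>k.
                 op_norm (partial_deriv k (P j) \<mu>) \<le> norm \<mu> powr (real h - 1) / \<bar>H \<mu>\<bar>))"
proof -
  define N where "N = M * (M + 1)"
  define eps where "eps = 1 / (4 * real M * Kc * C1 ^ (2 * N))"
  define H where "H \<mu> = eps * H0 J M \<mu>" for \<mu>
  have N1: "N \<ge> 1" using M_pos by (simp add: N_def)
  have eps: "eps > 0" using M_pos Kc_pos C1_pos by (simp add: eps_def)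
  have hom: "homog_poly (2 * N) H"
    unfolding homog_poly_def H_def[abs_def]
    by (auto intro!: pf_cmult pf_H0 simp: H0_homog N_def)
  obtain \<mu>0 where \<mu>0: "\<mu>0 \<in> \<Lambda>" using Lambda_ne by blast
  have ex: "\<exists>\<mu>. H \<mu> \<noteq> 0" using H0_nonzero[OF \<mu>0] eps by (auto simp: H_def)
  have pt: "H \<mu> \<noteq> 0 \<and>
              (\<forall>j\<in>{1..M}. \<forall>k.
                 \<bar>partial_deriv k (b j) \<mu> / b j \<mu>\<bar> \<le> norm \<mu> powr (real (2 * N) - 1) / \<bar>H \<mu>\<bar>) \<and>
              (\<forall>j\<in>{0..M}. \<forall>k.
                 op_norm (partial_deriv k (P j) \<mu>) \<le> norm \<mu> powr (real (2 * N) - 1) / \<bar>H \<mu>\<bar>)"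
    if mu: "\<mu> \<in> \<Lambda>" for \<mu>
  proof -
    let ?x = "norm \<mu>"
    let ?L = "C1\<^sup>2 * ?x\<^sup>2"
    define B where "B = Kc * ?L ^ N / (?L * \<bar>H0 J M \<mu>\<bar>)"
    have x: "?x > 0" using mu_nonzero[OF mu] by simp
    have H0: "H0 J M \<mu> \<noteq> 0" by (rule H0_nonzero[OF mu])
    have B0: "B \<ge> 0" using Kc_pos by (simp add: B_def)
    have gapB: "1 / \<bar>lamf \<mu> j - lamf \<mu> i\<bar> \<le> B" if "i \<in> {0..M}" "j \<in> {0..M}" "i \<noteq> j" for i j
      using gap_inv_bound[OF mu that] by (simp add: B_def N_def)
    define T where "T = 4 * real M * C1\<^sup>2 * ?x * B"
    have RHS: "norm \<mu> powr (real (2 * N) - 1) / \<bar>H \<mu>\<bar> = T"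
    proof -
      have p: "norm \<mu> powr (real (2 * N) - 1) = ?x ^ (2 * N - 1)"
        using x N1 by (simp add: powr_realpow[symmetric] of_nat_diff)
      have e1: "N = 1 + (N - 1)" and e2: "2 * N = 2 + 2 * (N - 1)" and e3: "2 * N - 1 = 1 + 2 * (N - 1)"
        using N1 by auto
      have LN: "?L ^ N = ?L * (C1 ^ (2 * (N - 1)) * ?x ^ (2 * (N - 1)))"
      proof -
        have "?L ^ N = ?L * ?L ^ (N - 1)" by (subst e1) (simp only: power_add power_one_right)
        also have "?L ^ (N - 1) = C1 ^ (2 * (N - 1)) * ?x ^ (2 * (N - 1))"
          by (simp add: power_mult_distrib power_mult)
        finally show ?thesis .
      qed
      have c: "C1 ^ (2 * N) = C1\<^sup>2 * C1 ^ (2 * (N - 1))"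
        by (subst e2) (simp only: power_add)
      have xx: "?x ^ (2 * N - 1) = ?x * ?x ^ (2 * (N - 1))"
        by (subst e3) (simp only: power_add power_one_right)
      have L0: "?L > 0" using x C1_pos by simp
      show ?thesis
        unfolding p T_def B_def H_def LN xx eps_def c
        using L0 H0 x C1_pos M_pos Kc_pos by (simp add: field_simps abs_mult power2_eq_square)
    qed
    have Sd0: "op_norm (Sd \<mu> k) \<le> 2 * C1\<^sup>2 * ?x" for k by (rule Sd_bound)
    have bpart: "\<bar>partial_deriv k (b j) \<mu> / b j \<mu>\<bar> \<le> T" if j: "j \<in> {1..M}" for j k
    proof -
      have "\<bar>partial_deriv k (b j) \<mu> / b j \<mu>\<bar> \<le> op_norm (Sd \<mu> k) / (2 * lamf \<mu> j)"
        using deriv_bounds(1)[OF mu] j by blast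
      also have "\<dots> = op_norm (Sd \<mu> k) * (1 / \<bar>lamf \<mu> j - lamf \<mu> 0\<bar>) / 2"
        using lam_pos[OF mu j] by (simp add: lamf_def[of _ 0])
      also have "\<dots> \<le> (2 * C1\<^sup>2 * ?x) * B / 2"
        using gapB[of 0 j] j Sd0[of k] B0 on_nonneg[of "Sd \<mu> k"]
        by (intro divide_right_mono mult_mono) auto
      also have "\<dots> \<le> T"
      proof -
        have y0: "0 \<le> C1\<^sup>2 * ?x * B" using B0 by simp
        have "1 \<le> 4 * real M" using M_pos by simp
        from mult_right_mono[OF this y0] show ?thesis unfolding T_def by (simp add: mult_ac)
      qed
      finally show ?thesis .
    qed
    have ppart: "op_norm (partial_deriv k (P j) \<mu>) \<le> T" if j: "j \<in> {0..M}" for j k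
    proof -
      have "op_norm (partial_deriv k (P j) \<mu>) \<le> 2 * (\<Sum>i\<in>{0..M}-{j}. op_norm (Sd \<mu> k) / \<bar>lamf \<mu> j - lamf \<mu> i\<bar>)"
        using deriv_bounds(2)[OF mu] j by blast
      also have "\<dots> \<le> 2 * (\<Sum>i\<in>{0..M}-{j}. (2 * C1\<^sup>2 * ?x) * B)"
      proof (intro mult_left_mono sum_mono)
        fix i assume i: "i \<in> {0..M} - {j}"
        have "op_norm (Sd \<mu> k) / \<bar>lamf \<mu> j - lamf \<mu> i\<bar> = op_norm (Sd \<mu> k) * (1 / \<bar>lamf \<mu> j - lamf \<mu> i\<bar>)"
          by simp
        also have "\<dots> \<le> (2 * C1\<^sup>2 * ?x) * B"
          using gapB[of i j] i j Sd0[of k] on_nonneg[of "Sd \<mu> k"] by (intro mult_mono) auto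
        finally show "op_norm (Sd \<mu> k) / \<bar>lamf \<mu> j - lamf \<mu> i\<bar> \<le> (2 * C1\<^sup>2 * ?x) * B" .
      qed simp
      also have "\<dots> = T" using j by (simp add: T_def card_Diff_singleton)
      finally show ?thesis .
    qed
    show ?thesis using H0 eps bpart ppart RHS by (simp add: H_def)
  qed
  show ?thesis using hom ex pt by blast
qed

end


theorem lemma4p2:
  fixes J :: "'d::finite \<Rightarrow> real^'n::finite^'n"
    and \<Lambda> :: "(real^'d) set"
    and M :: nat and r :: "nat \<Rightarrow> nat"
    and b :: "nat \<Rightarrow> real^'d \<Rightarrow> real"
    and P :: "nat \<Rightarrow> real^'d \<Rightarrow> real^'n^'n"
  assumes J_skew: "\<And>k. transpose (J k) = - J k"
    and J_HS_orthonormal: "\<And>k l. trace (transpose (J k) ** J l) = (if k = l then 1 else 0)"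
    and Lambda_ne: "\<Lambda> \<noteq> {}"
    and Lambda_zariski: "zariski_open \<Lambda>"
    and Lambda_homog: "dilation_invariant \<Lambda>"
    and M_pos: "M > 0"
    and r_pos: "\<And>j. j \<in> {1..M} \<Longrightarrow> r j > 0"
    and decomp: "\<And>\<mu>. \<mu> \<in> \<Lambda> \<Longrightarrow> mat_sqrt (- (Jmu J \<mu> ** Jmu J \<mu>)) = (\<Sum>j\<in>{1..M}. b j \<mu> *\<^sub>R P j \<mu>)"
    and b_pos: "\<And>\<mu> j. \<mu> \<in> \<Lambda> \<Longrightarrow> j \<in> {1..M} \<Longrightarrow> b j \<mu> > 0"
    and b_distinct: "\<And>\<mu> i j. \<mu> \<in> \<Lambda> \<Longrightarrow> i \<in> {1..M} \<Longrightarrow> j \<in> {1..M} \<Longrightarrow> i \<noteq> j \<Longrightarrow> b i \<mu> \<noteq> b j \<mu>"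
    and P_proj: "\<And>\<mu> j. \<mu> \<in> \<Lambda> \<Longrightarrow> j \<in> {1..M} \<Longrightarrow>
                   P j \<mu> ** P j \<mu> = P j \<mu> \<and> transpose (P j \<mu>) = P j \<mu>"
    and P_orth: "\<And>\<mu> i j. \<mu> \<in> \<Lambda> \<Longrightarrow> i \<in> {1..M} \<Longrightarrow> j \<in> {1..M} \<Longrightarrow> i \<noteq> j \<Longrightarrow>
                   P i \<mu> ** P j \<mu> = 0"
    and P_rank: "\<And>\<mu> j. \<mu> \<in> \<Lambda> \<Longrightarrow> j \<in> {1..M} \<Longrightarrow> rank (P j \<mu>) = 2 * r j"
    and b_algebraic: "\<And>j. j \<in> {1..M} \<Longrightarrow> algebraic_fun_on \<Lambda> (b j)"
    and P_algebraic: "\<And>j a c. j \<in> {1..M} \<Longrightarrow> algebraic_fun_on \<Lambda> (\<lambda>\<mu>. P j \<mu> $ a $ c)"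
    and b_analytic: "\<And>j. j \<in> {1..M} \<Longrightarrow> real_analytic_on (b j) \<Lambda>"
    and P_analytic: "\<And>j a c. j \<in> {1..M} \<Longrightarrow> real_analytic_on (\<lambda>\<mu>. P j \<mu> $ a $ c) \<Lambda>"
    and P0_def: "\<And>\<mu>. \<mu> \<in> \<Lambda> \<Longrightarrow> P 0 \<mu> = mat 1 - (\<Sum>j\<in>{1..M}. P j \<mu>)"
    and P0_ker: "\<And>\<mu>. \<mu> \<in> \<Lambda> \<Longrightarrow>
                   P 0 \<mu> ** P 0 \<mu> = P 0 \<mu> \<and> transpose (P 0 \<mu>) = P 0 \<mu> \<and>
                   range (\<lambda>x. P 0 \<mu> *v x) = {x. Jmu J \<mu> *v x = 0}"
  shows "\<exists>H :: real^'d \<Rightarrow> real. \<exists>h :: nat. homog_poly h H \<and> (\<exists>\<mu>. H \<mu> \<noteq> 0) \<and>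
           (\<forall>\<mu>\<in>\<Lambda>. H \<mu> \<noteq> 0 \<and>
              (\<forall>j\<in>{1..M}. \<forall>k.
                 \<bar>partial_deriv k (b j) \<mu> / b j \<mu>\<bar> \<le> norm \<mu> powr (real h - 1) / \<bar>H \<mu>\<bar>) \<and>
              (\<forall>j\<in>{0..M}. \<forall>k.
                 op_norm (partial_deriv k (P j) \<mu>) \<le> norm \<mu> powr (real h - 1) / \<bar>H \<mu>\<bar>))"
  proof -
  interpret LS J \<Lambda> M r b P
    by unfold_locales (fact J_skew Lambda_ne Lambda_zariski M_pos r_pos decomp b_pos b_distinct P_proj
        P_orth P_rank b_analytic P_analytic P0_def P0_ker)+
  show ?thesis by (rule main)
qed

end
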